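(* Let $\mathcal{H}_A\cong\mathcal{H}_B\cong\mathbb{C}^d$ with $d\ge2$, and $O_+=\sum_{\vec a\in\mathbb{Z}_d^3}\big[1+(-d)^{wt(\vec a)-1}\big]|\vec a\rangle\langle\vec a|$ on $(\mathbb{C}^d)^{\otimes3}$. For every density operator $\rho_{AB}$ on $\mathcal{H}_A\otimes\mathcal{H}_B$, with marginals $\rho_A,\rho_B$, $$\begin{aligned}\mathrm{Tr}\big[(\Phi^3_A(O_+^2)\otimes\Phi^3_B(O_+^2))\rho_{AB}^{\otimes3}\big]=\frac{1}{(d+2)^2}\Big\{&\big[\mathrm{Tr}(\rho_A^2)+\mathrm{Tr}(\rho_B^2)\big]\,3d(d-1)^2(d+1)(d^2+3d+4)\\&+\big[\mathrm{Tr}(\rho_A^3)+\mathrm{Tr}(\rho_B^3)\big]\,2(d-1)\big((d-1)d^2+6\big)(d^2+3d+4)\\&+\mathrm{Tr}(\rho_{AB}^2)\,3d^2(d^2-1)^2+\mathrm{Tr}(\rho_{AB}^3)\,2\big((d-1)d^2+6\big)^2\\&+\mathrm{Tr}[\rho_{AB}(\rho_A\otimes\rho_B)]\,6d^2(d^2-1)^2\\&+\big[\mathrm{Tr}(\rho_{AB}^2(\rho_A\otimes I))+\mathrm{Tr}(\rho_{AB}^2(I\otimes\rho_B))\big]\,6d(d-1)(d+1)\big((d-1)d^2+6\big)\\&+2\,\mathrm{Tr}[(\rho_{AB}^{T_A})^3]\big((d-1)d^2+6\big)^2+\big(d(d+1)^2-4\big)^2\Big\}.\end{aligned}$$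
   Context: $wt(\vec a)$ is the largest number of equal entries of $\vec a=(a_1,a_2,a_3)$ (1 if pairwise distinct, 2 if exactly two coincide, 3 if all coincide). $\Phi^3(X)=\int dU\,U^{\otimes3}XU^{\dagger\otimes3}$ with $U$ Haar-random on $U(d)$ (or from a unitary 3-design), applied independently on $\mathcal{H}_A^{\otimes3}$ and $\mathcal{H}_B^{\otimes3}$, with $(\mathcal{H}_A\otimes\mathcal{H}_B)^{\otimes3}\cong\mathcal{H}_A^{\otimes3}\otimes\mathcal{H}_B^{\otimes3}$. $\rho_{AB}^{T_A}$ is the partial transpose with respect to $A$ in the computational basis. *)

theory Defs
  imports "HOL-Probability.Probability"
begin

text \<open>Operators on a finite-dimensional Hilbert space with orthonormal (computational)
basis indexed by a finite type 'a are represented as complex matrices 'a => 'a => complex.\<close>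

type_synonym 'a op = "'a \<Rightarrow> 'a \<Rightarrow> complex"

definition mmul :: "('a::finite) op \<Rightarrow> 'a op \<Rightarrow> 'a op" where
  "mmul X Y = (\<lambda>i j. \<Sum>k\<in>UNIV. X i k * Y k j)"

definition tr :: "('a::finite) op \<Rightarrow> complex" where
  "tr X = (\<Sum>i\<in>UNIV. X i i)"

definition idop :: "'a op" where
  "idop = (\<lambda>i j. if i = j then 1 else 0)"

definition kron :: "'a op \<Rightarrow> 'b op \<Rightarrow> ('a \<times> 'b) op" where
  "kron X Y = (\<lambda>(a, b) (a', b'). X a a' * Y b b')"

definition ptrB :: "('a \<times> 'b::finite) op \<Rightarrow> 'a op" where
  "ptrB R = (\<lambda>a a'. \<Sum>b\<in>UNIV. R (a, b) (a', b))"

definition ptrA :: "('a::finite \<times> 'b) op \<Rightarrow> 'b op" where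
  "ptrA R = (\<lambda>b b'. \<Sum>a\<in>UNIV. R (a, b) (a, b'))"

definition ptransA :: "('a \<times> 'b) op \<Rightarrow> ('a \<times> 'b) op" where
  "ptransA R = (\<lambda>(a, b) (a', b'). R (a', b) (a, b'))"

definition density :: "('a::finite) op \<Rightarrow> bool" where
  "density R \<longleftrightarrow>
     (\<forall>v :: 'a \<Rightarrow> complex.
        (\<Sum>i\<in>UNIV. \<Sum>j\<in>UNIV. cnj (v i) * R i j * v j) \<in> \<real> \<and>
        0 \<le> Re (\<Sum>i\<in>UNIV. \<Sum>j\<in>UNIV. cnj (v i) * R i j * v j)) \<and> tr R = 1"

definition cadj :: "complex^'n^'n \<Rightarrow> complex^'n^'n" where
  "cadj U = (\<chi> i j. cnj (U $ j $ i))"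

definition unitary_mat :: "complex^'n^'n \<Rightarrow> bool" where
  "unitary_mat U \<longleftrightarrow> U ** cadj U = mat 1 \<and> cadj U ** U = mat 1"

definition haar_measure :: "(complex^'n^'n) measure \<Rightarrow> bool" where
  "haar_measure \<mu> \<longleftrightarrow>
     prob_space \<mu> \<and> sets \<mu> = sets borel \<and> (AE U in \<mu>. unitary_mat U) \<and>
     (\<forall>V. unitary_mat V \<longrightarrow> distr \<mu> borel (\<lambda>U. V ** U) = \<mu>)"

definition U3 :: "complex^'n^'n \<Rightarrow> ('n \<times> 'n \<times> 'n) op" where
  "U3 U = (\<lambda>(a1, a2, a3) (c1, c2, c3). U $ a1 $ c1 * U $ a2 $ c2 * U $ a3 $ c3)"

definition twirl3 :: "(complex^'n^'n) measure \<Rightarrow> ('n::finite \<times> 'n \<times> 'n) op \<Rightarrow> ('n \<times> 'n \<times> 'n) op" where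
  "twirl3 \<mu> X = (\<lambda>a b. \<integral>U. (\<Sum>c\<in>UNIV. \<Sum>e\<in>UNIV. U3 U a c * X c e * cnj (U3 U b e)) \<partial>\<mu>)"

text \<open>wt(a): largest number of equal entries of a triple.\<close>
definition wt :: "'n \<times> 'n \<times> 'n \<Rightarrow> nat" where
  "wt = (\<lambda>(a1, a2, a3). if a1 = a2 \<and> a2 = a3 then 3
                         else if a1 = a2 \<or> a2 = a3 \<or> a1 = a3 then 2 else 1)"

definition O_plus :: "('n::finite \<times> 'n \<times> 'n) op" where
  "O_plus = (\<lambda>a b. if a = b then 1 + (- of_nat CARD('n)) ^ (wt a - 1) else 0)"

text \<open>Tr[(M_A (x) M_B) rho^{(x)3}] using (H_A (x) H_B)^{(x)3} = H_A^{(x)3} (x) H_B^{(x)3}.\<close>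
definition tr_AB3 :: "('n \<times> 'n \<times> 'n) op \<Rightarrow> ('m \<times> 'm \<times> 'm) op \<Rightarrow> ('n::finite \<times> 'm::finite) op \<Rightarrow> complex" where
  "tr_AB3 MA MB R =
     (\<Sum>a\<in>UNIV. \<Sum>a'\<in>UNIV. \<Sum>b\<in>UNIV. \<Sum>b'\<in>UNIV.
        MA a a' * MB b b' *
        (case (a, a', b, b') of ((a1, a2, a3), (a1', a2', a3'), (b1, b2, b3), (b1', b2', b3')) \<Rightarrow>
           R (a1', b1') (a1, b1) * R (a2', b2') (a2, b2) * R (a3', b3') (a3, b3)))"

end

theory Submission
  imports Defs "HOL-Library.Multiset"
begin

lemma cont_mm: "continuous_on UNIV (\<lambda>U::complex^'n::finite^'n. V ** U)"
  unfolding matrix_matrix_mult_def by (intro continuous_intros)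

lemma meas_mm: "(\<lambda>U::complex^'n::finite^'n. V ** U) \<in> borel_measurable borel"
  by (intro borel_measurable_continuous_onI cont_mm)

lemma meas_test: "(\<lambda>U::complex^'n::finite^'n. U$a$k * U$b$k * cnj (U$c$k)) \<in> borel_measurable borel"
  by (intro borel_measurable_continuous_onI continuous_intros)

lemma haar_inv:
  fixes \<mu> :: "(complex^'n::finite^'n) measure"
  and h :: "complex^'n^'n \<Rightarrow> complex"
  assumes "haar_measure \<mu>" "unitary_mat V" "h \<in> borel_measurable borel"
  shows "(\<integral>U. h (V ** U) \<partial>\<mu>) = (\<integral>U. h U \<partial>\<mu>)"
proof -
  have s: "sets \<mu> = sets borel" and d: "distr \<mu> borel (\<lambda>U. V ** U) = \<mu>"
    using assms unfolding haar_measure_def by auto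
  have m: "(\<lambda>U. V ** U) \<in> measurable \<mu> borel"
    using meas_mm measurable_cong_sets[OF s refl] by blast
  have "(\<integral>U. h U \<partial>\<mu>) = (\<integral>U. h U \<partial>(distr \<mu> borel (\<lambda>U. V ** U)))" using d by simp
  also have "\<dots> = (\<integral>U. h (V ** U) \<partial>\<mu>)" by (rule integral_distr[OF m assms(3)])
  finally show ?thesis by simp
qed

lemma unit_row: "unitary_mat U \<Longrightarrow> (\<Sum>j\<in>UNIV. U$a$j * cnj (U$b$j)) = (if a = b then 1 else 0)"
  unfolding unitary_mat_def
  by (drule conjunct1, drule arg_cong[where f="\<lambda>M. M$a$b"])
     (simp add: matrix_matrix_mult_def cadj_def mat_def)

lemma unit_col: "unitary_mat U \<Longrightarrow> (\<Sum>i\<in>UNIV. cnj (U$i$a) * U$i$b) = (if a = b then 1 else 0)"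
  unfolding unitary_mat_def
  by (drule conjunct2, drule arg_cong[where f="\<lambda>M. M$a$b"])
     (simp add: matrix_matrix_mult_def cadj_def mat_def)

lemma unit_bound: assumes "unitary_mat U" shows "norm (U$i$j) \<le> 1"
proof -
  have "(\<Sum>j\<in>UNIV. U$i$j * cnj (U$i$j)) = 1" using unit_row[OF assms, of i i] by simp
  hence "(\<Sum>j\<in>UNIV. complex_of_real ((cmod (U$i$j))^2)) = 1"
    by (simp only: complex_norm_square)
  hence s: "(\<Sum>j\<in>UNIV. (cmod (U$i$j))^2) = 1"
    by (metis of_real_eq_1_iff of_real_sum)
  have "(cmod (U$i$j))^2 \<le> (\<Sum>j\<in>UNIV. (cmod (U$i$j))^2)"
    by (rule member_le_sum) auto
  hence "(cmod (U$i$j))^2 \<le> 1" using s by simp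
  thus ?thesis by (simp add: power_le_one_iff abs_le_square_iff)
qed

lemma haar_integrable:
  fixes \<mu> :: "(complex^'n::finite^'n) measure" and h :: "complex^'n^'n \<Rightarrow> complex"
  assumes "haar_measure \<mu>" "h \<in> borel_measurable borel"
    "\<And>U. unitary_mat U \<Longrightarrow> norm (h U) \<le> B"
  shows "integrable \<mu> h"
proof -
  have s: "sets \<mu> = sets borel" and p: "prob_space \<mu>" and ae: "AE U in \<mu>. unitary_mat U"
    using assms unfolding haar_measure_def by auto
  interpret prob_space \<mu> by (rule p)
  have m: "h \<in> borel_measurable \<mu>"
    using assms(2) measurable_cong_sets[OF s refl] by blast
  show ?thesis
    by (rule integrable_const_bound[where B=B]) (use ae assms(3) m in auto)
qed

definition pr :: "complex^'n^'n \<Rightarrow> 'n \<Rightarrow> 'n\<times>'n\<times>'n \<Rightarrow> complex" where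
  "pr U k a = U$(fst a)$k * U$(fst (snd a))$k * U$(snd (snd a))$k"

definition mom :: "(complex^'n::finite^'n) measure \<Rightarrow> 'n \<Rightarrow> 'n\<times>'n\<times>'n \<Rightarrow> 'n\<times>'n\<times>'n \<Rightarrow> complex" where
  "mom \<mu> k a b = (\<integral>U. pr U k a * cnj (pr U k b) \<partial>\<mu>)"

lemma pr_meas: "(\<lambda>U::complex^'n::finite^'n. pr U k a * cnj (pr U k b)) \<in> borel_measurable borel"
  unfolding pr_def by (intro borel_measurable_continuous_onI continuous_intros)

lemma pr_bound: "unitary_mat U \<Longrightarrow> norm (pr U k a) \<le> 1"
  unfolding pr_def norm_mult
  by (intro mult_le_one unit_bound) (auto intro: unit_bound mult_le_one)

lemma mono_bound: "unitary_mat U \<Longrightarrow> norm (pr U k a * cnj (pr U k b)) \<le> 1"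
  unfolding norm_mult complex_mod_cnj by (intro mult_le_one pr_bound) auto

lemma mono_int:
  fixes \<mu> :: "(complex^'n::finite^'n) measure"
  assumes "haar_measure \<mu>"
  shows "integrable \<mu> (\<lambda>U. pr U k a * cnj (pr U k b))"
  by (rule haar_integrable[OF assms pr_meas mono_bound])

definition Dph :: "'n \<Rightarrow> complex^'n^'n" where
  "Dph x = (\<chi> i j. if i = j then (if i = x then \<i> else 1) else 0)"

lemma Dph_mult: "(Dph x ** U)$i$k = (if i = x then \<i> else 1) * (U$i$k::complex)"
  unfolding matrix_matrix_mult_def Dph_def
  by (simp add: if_distrib[where f="\<lambda>z. z * _"] cong: if_cong)

lemma Dph_unitary: "unitary_mat (Dph x)"
  unfolding unitary_mat_def
  by (auto simp: vec_eq_iff matrix_matrix_mult_def cadj_def Dph_def mat_def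
       if_distrib[where f="\<lambda>z. z * _"] if_distrib[where f=cnj] if_distrib[where f="\<lambda>z. _ * z"] cong: if_cong)

definition cnt :: "'n \<Rightarrow> 'n\<times>'n\<times>'n \<Rightarrow> nat" where
  "cnt x a = (if fst a = x then 1 else 0) + (if fst (snd a) = x then 1 else 0) + (if snd (snd a) = x then 1 else 0)"

definition p12 :: "'n\<times>'n\<times>'n \<Rightarrow> 'n\<times>'n\<times>'n" where "p12 = (\<lambda>(x,y,z). (y,x,z))"
definition p13 :: "'n\<times>'n\<times>'n \<Rightarrow> 'n\<times>'n\<times>'n" where "p13 = (\<lambda>(x,y,z). (z,y,x))"
definition p23 :: "'n\<times>'n\<times>'n \<Rightarrow> 'n\<times>'n\<times>'n" where "p23 = (\<lambda>(x,y,z). (x,z,y))"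
definition c1 :: "'n\<times>'n\<times>'n \<Rightarrow> 'n\<times>'n\<times>'n" where "c1 = (\<lambda>(x,y,z). (y,z,x))"
definition c2 :: "'n\<times>'n\<times>'n \<Rightarrow> 'n\<times>'n\<times>'n" where "c2 = (\<lambda>(x,y,z). (z,x,y))"

lemma cnt_perm:
  assumes "\<And>x. cnt x a = cnt x b"
  shows "a = b \<or> a = p12 b \<or> a = p13 b \<or> a = p23 b \<or> a = c1 b \<or> a = c2 b"
proof -
  obtain a1 a2 a3 where a: "a = (a1,a2,a3)" by (cases a) auto
  obtain b1 b2 b3 where b: "b = (b1,b2,b3)" by (cases b) auto
  have h: "\<And>x. cnt x (a1,a2,a3) = cnt x (b1,b2,b3)" using assms a b by auto
  have "{#a1,a2,a3#} = {#b1,b2,b3#}"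
  proof (rule multiset_eqI)
    fix x show "count {#a1,a2,a3#} x = count {#b1,b2,b3#} x"
      using h[of x] unfolding cnt_def by (auto split: if_splits)
  qed
  hence "(a1,a2,a3) = (b1,b2,b3) \<or> (a1,a2,a3) = (b2,b1,b3) \<or> (a1,a2,a3) = (b3,b2,b1) \<or> (a1,a2,a3) = (b1,b3,b2)
 \<or> (a1,a2,a3) = (b2,b3,b1) \<or> (a1,a2,a3) = (b3,b1,b2)"
    by (auto simp: add_eq_conv_ex)
  thus ?thesis unfolding a b p12_def p13_def p23_def c1_def c2_def by auto
qed

lemma pr_Dph: "pr (Dph x ** U) k a = \<i> ^ cnt x a * pr U k a"
  unfolding pr_def Dph_mult cnt_def by (auto simp: power_add)

lemma i_pow_ne: assumes "m \<le> 3" "n \<le> (3::nat)" "m \<noteq> n"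
  shows "\<i> ^ m * cnj (\<i> ^ n) \<noteq> 1"
proof -
  have "m \<in> {0,1,2,3}" "n \<in> {0,1,2,3}" using assms by auto
  thus ?thesis using assms(3) by (auto simp: numeral_eq_Suc complex_eq_iff)
qed

lemma cnt_le: "cnt x a \<le> 3" unfolding cnt_def by auto

lemma mom_phase:
  fixes \<mu> :: "(complex^'n::finite^'n) measure"
  assumes "haar_measure \<mu>" "cnt x a \<noteq> cnt x b"
  shows "mom \<mu> k a b = 0"
proof -
  let ?z = "\<i> ^ cnt x a * cnj (\<i> ^ cnt x b)"
  have "mom \<mu> k a b = (\<integral>U. pr (Dph x ** U) k a * cnj (pr (Dph x ** U) k b) \<partial>\<mu>)"
    unfolding mom_def
    by (rule haar_inv[OF assms(1) Dph_unitary pr_meas, symmetric])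
  also have "\<dots> = (\<integral>U. ?z * (pr U k a * cnj (pr U k b)) \<partial>\<mu>)"
    unfolding pr_Dph by (simp add: mult_ac)
  also have "\<dots> = ?z * mom \<mu> k a b" unfolding mom_def by simp
  finally have "(1 - ?z) * mom \<mu> k a b = 0" by (simp add: algebra_simps)
  moreover have "?z \<noteq> 1" by (rule i_pow_ne[OF cnt_le cnt_le assms(2)])
  ultimately show ?thesis by simp
qed

lemma mom_nonperm:
  fixes \<mu> :: "(complex^'n::finite^'n) measure"
  assumes "haar_measure \<mu>"
   "\<not> (a = b \<or> a = p12 b \<or> a = p13 b \<or> a = p23 b \<or> a = c1 b \<or> a = c2 b)"
  shows "mom \<mu> k a b = 0"
  using cnt_perm assms mom_phase by metis

definition swp :: "'n \<Rightarrow> 'n \<Rightarrow> 'n \<Rightarrow> 'n" where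
  "swp x y i = (if i = x then y else if i = y then x else i)"

definition Sw :: "'n \<Rightarrow> 'n \<Rightarrow> complex^'n^'n" where
  "Sw x y = (\<chi> i j. if j = swp x y i then 1 else 0)"

lemma swp_inj: "swp x y i = swp x y l \<longleftrightarrow> i = l"
  unfolding swp_def by auto

lemma Sw_mult: "(Sw x y ** U)$i$k = (U$(swp x y i)$k::complex)"
  unfolding matrix_matrix_mult_def Sw_def
  by (simp add: if_distrib[where f="\<lambda>z. z * _"] cong: if_cong)

lemma Sw_unitary: "unitary_mat (Sw x y :: complex^'n::finite^'n)"
proof -
  have 1: "(\<Sum>k\<in>UNIV. (if k = swp x y i then 1 else 0) * cnj (if k = swp x y l then 1 else (0::complex)))
     = (if i = l then 1 else 0)" for i l
    by (simp add: if_distrib[where f="\<lambda>z. z * _"] if_distrib[where f=cnj] swp_inj cong: if_cong)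
  have 2: "(\<Sum>k\<in>UNIV. cnj (if i = swp x y k then 1 else 0) * (if l = swp x y k then 1 else (0::complex)))
     = (if i = l then 1 else 0)" for i l
  proof -
    have "(\<Sum>k\<in>UNIV. cnj (if i = swp x y k then 1 else 0) * (if l = swp x y k then 1 else (0::complex)))
      = (\<Sum>k\<in>UNIV. (if k = swp x y i then (if l = i then 1 else 0) else (0::complex)))"
      by (rule sum.cong) (auto simp: swp_def)
    thus ?thesis by simp
  qed
  show ?thesis unfolding unitary_mat_def
    by (simp add: vec_eq_iff matrix_matrix_mult_def cadj_def Sw_def mat_def 1 2)
qed

definition map3 :: "('n \<Rightarrow> 'n) \<Rightarrow> 'n\<times>'n\<times>'n \<Rightarrow> 'n\<times>'n\<times>'n" where
  "map3 f a = (f (fst a), f (fst (snd a)), f (snd (snd a)))"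

lemma pr_Sw: "pr (Sw x y ** U) k a = pr U k (map3 (swp x y) a)"
  unfolding pr_def Sw_mult map3_def by simp

lemma mom_swap:
  fixes \<mu> :: "(complex^'n::finite^'n) measure"
  assumes "haar_measure \<mu>"
  shows "mom \<mu> k (map3 (swp x y) a) (map3 (swp x y) b) = mom \<mu> k a b"
  unfolding mom_def
  using haar_inv[OF assms Sw_unitary pr_meas, of x y k a b] by (simp add: pr_Sw)

definition Rot :: "'n \<Rightarrow> 'n \<Rightarrow> complex^'n^'n" where
  "Rot x y = (\<chi> i j. if i = x then (if j = x then 3/5 else if j = y then -4/5 else 0)
     else if i = y then (if j = x then 4/5 else if j = y then 3/5 else 0)
     else if i = j then 1 else 0)"

lemma sum_split2: "x \<noteq> y \<Longrightarrow> sum f (UNIV::'n::finite set) = f x + f y + sum f (UNIV - {x,y})"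
proof -
  assume "x \<noteq> y"
  have "sum f UNIV = sum f {x,y} + sum f (UNIV - {x,y})"
    by (metis add.commute finite sum.subset_diff top_greatest)
  thus ?thesis using \<open>x \<noteq> y\<close> by simp
qed

lemma Rot_mult: "x \<noteq> y \<Longrightarrow> (Rot x y ** U)$i$k = (if i = x then 3/5 * U$x$k - 4/5 * U$y$k
     else if i = y then 4/5 * U$x$k + 3/5 * U$y$k else (U$i$k::complex))"
  unfolding matrix_matrix_mult_def Rot_def
  by (auto simp: sum_split2[of x y] if_distrib[where f="\<lambda>z. z * _"] cong: if_cong sum.cong_simp)

lemma Rot_unitary: "x \<noteq> y \<Longrightarrow> unitary_mat (Rot x y :: complex^'n::finite^'n)"
  unfolding unitary_mat_def
  by (auto simp: vec_eq_iff matrix_matrix_mult_def cadj_def Rot_def mat_def sum_split2[of x y]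
       if_distrib[where f="\<lambda>z. z * _"] if_distrib[where f=cnj] if_distrib[where f="\<lambda>z. _ * z"] cong: if_cong sum.cong_simp)
     (auto intro!: sum.neutral split: if_splits)

lemma mom_lin:
  fixes \<mu> :: "(complex^'n::finite^'n) measure"
  assumes "haar_measure \<mu>" "finite J"
  shows "(\<integral>U. (\<Sum>j\<in>J. c j * pr U k (t j)) * cnj (\<Sum>l\<in>J. c l * pr U k (t l)) \<partial>\<mu>)
     = (\<Sum>j\<in>J. \<Sum>l\<in>J. c j * cnj (c l) * mom \<mu> k (t j) (t l))"
proof -
  have e: "(\<Sum>j\<in>J. c j * pr U k (t j)) * cnj (\<Sum>l\<in>J. c l * pr U k (t l))
     = (\<Sum>j\<in>J. \<Sum>l\<in>J. c j * cnj (c l) * (pr U k (t j) * cnj (pr U k (t l))))" for U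
    by (simp add: cnj_sum sum_product mult_ac)
  have "(\<integral>U. (\<Sum>j\<in>J. c j * pr U k (t j)) * cnj (\<Sum>l\<in>J. c l * pr U k (t l)) \<partial>\<mu>)
     = (\<integral>U. (\<Sum>j\<in>J. \<Sum>l\<in>J. c j * cnj (c l) * (pr U k (t j) * cnj (pr U k (t l)))) \<partial>\<mu>)"
    by (simp only: e)
  also have "\<dots> = (\<Sum>j\<in>J. \<integral>U. (\<Sum>l\<in>J. c j * cnj (c l) * (pr U k (t j) * cnj (pr U k (t l)))) \<partial>\<mu>)"
    by (rule Bochner_Integration.integral_sum) (intro Bochner_Integration.integrable_sum integrable_mult_right mono_int[OF assms(1)])
  also have "\<dots> = (\<Sum>j\<in>J. \<Sum>l\<in>J. \<integral>U. c j * cnj (c l) * (pr U k (t j) * cnj (pr U k (t l))) \<partial>\<mu>)"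
    by (intro sum.cong refl, rule Bochner_Integration.integral_sum) (intro integrable_mult_right mono_int[OF assms(1)])
  also have "\<dots> = (\<Sum>j\<in>J. \<Sum>l\<in>J. c j * cnj (c l) * mom \<mu> k (t j) (t l))"
    unfolding mom_def by simp
  finally show ?thesis .
qed

lemma mom_rot:
  fixes \<mu> :: "(complex^'n::finite^'n) measure"
  assumes "haar_measure \<mu>" "x \<noteq> y"
  shows "mom \<mu> k a b = (\<integral>U. pr (Rot x y ** U) k a * cnj (pr (Rot x y ** U) k b) \<partial>\<mu>)"
  unfolding mom_def
  by (rule haar_inv[OF assms(1) Rot_unitary[OF assms(2)] pr_meas, symmetric])

lemma rot1:
  fixes \<mu> :: "(complex^'n::finite^'n) measure"
  assumes h: "haar_measure \<mu>" and xy: "x \<noteq> y"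
  shows "mom \<mu> k (x,x,x) (x,x,x) = 3 * mom \<mu> k (x,x,y) (x,x,y)"
proof -
  define t :: "nat \<Rightarrow> 'n\<times>'n\<times>'n" where
    "t = (\<lambda>j. if j = 3 then (x,x,x) else if j = 2 then (x,x,y) else if j = 1 then (x,y,y) else (y,y,y))"
  define c :: "nat \<Rightarrow> complex" where
    "c = (\<lambda>j. if j = 3 then 27/125 else if j = 2 then -108/125 else if j = 1 then 144/125 else -64/125)"
  have p: "pr (Rot x y ** U) k (x,x,x) = (\<Sum>j\<in>{0,1,2,3}. c j * pr U k (t j))" for U
    unfolding pr_def Rot_mult[OF xy] t_def c_def using xy
    by (simp add: algebra_simps power2_eq_square power3_eq_cube)
  have "mom \<mu> k (x,x,x) (x,x,x) = (\<Sum>j\<in>{0,1,2,3}. \<Sum>l\<in>{0,1,2,3}. c j * cnj (c l) * mom \<mu> k (t j) (t l))"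
    unfolding mom_rot[OF h xy, of k "(x,x,x)" "(x,x,x)"] p by (rule mom_lin[OF h]) simp
  also have "\<dots> = (27/125)^2 * mom \<mu> k (x,x,x) (x,x,x) + (108/125)^2 * mom \<mu> k (x,x,y) (x,x,y)
      + (144/125)^2 * mom \<mu> k (x,y,y) (x,y,y) + (64/125)^2 * mom \<mu> k (y,y,y) (y,y,y)"
    using xy by (simp add: t_def c_def mom_phase[OF h, of x] cnt_def power2_eq_square)
  finally have e: "mom \<mu> k (x,x,x) (x,x,x) = (27/125)^2 * mom \<mu> k (x,x,x) (x,x,x) + (108/125)^2 * mom \<mu> k (x,x,y) (x,x,y)
      + (144/125)^2 * mom \<mu> k (x,y,y) (x,y,y) + (64/125)^2 * mom \<mu> k (y,y,y) (y,y,y)" .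
  have s1: "mom \<mu> k (y,y,y) (y,y,y) = mom \<mu> k (x,x,x) (x,x,x)"
    using mom_swap[OF h, where x=x and y=y and k=k and a="(x,x,x)" and b="(x,x,x)"] by (simp add: map3_def swp_def)
  have s2: "mom \<mu> k (x,y,y) (x,y,y) = mom \<mu> k (x,x,y) (x,x,y)"
  proof -
    have "mom \<mu> k (x,y,y) (x,y,y) = mom \<mu> k (y,x,x) (y,x,x)"
      using mom_swap[OF h, where x=x and y=y and k=k and a="(x,y,y)" and b="(x,y,y)"] xy by (simp add: map3_def swp_def)
    also have "\<dots> = mom \<mu> k (x,x,y) (x,x,y)" unfolding mom_def pr_def by (simp add: mult_ac)
    finally show ?thesis .
  qed
  show ?thesis using e unfolding s1 s2 by (simp add: field_simps)
qed

lemma rot2: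
  fixes \<mu> :: "(complex^'n::finite^'n) measure"
  assumes h: "haar_measure \<mu>" and xy: "x \<noteq> y" "x \<noteq> z" "y \<noteq> z"
  shows "mom \<mu> k (x,x,z) (x,x,z) = 2 * mom \<mu> k (x,y,z) (x,y,z)"
proof -
  define t :: "nat \<Rightarrow> 'n\<times>'n\<times>'n" where
    "t = (\<lambda>j. if j = 2 then (x,x,z) else if j = 1 then (x,y,z) else (y,y,z))"
  define c :: "nat \<Rightarrow> complex" where
    "c = (\<lambda>j. if j = 2 then 9/25 else if j = 1 then -24/25 else 16/25)"
  have p: "pr (Rot x y ** U) k (x,x,z) = (\<Sum>j\<in>{0,1,2}. c j * pr U k (t j))" for U
    unfolding pr_def Rot_mult[OF xy(1)] t_def c_def using xy
    by (simp add: algebra_simps power2_eq_square)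
  have "mom \<mu> k (x,x,z) (x,x,z) = (\<Sum>j\<in>{0,1,2}. \<Sum>l\<in>{0,1,2}. c j * cnj (c l) * mom \<mu> k (t j) (t l))"
    unfolding mom_rot[OF h xy(1), of k "(x,x,z)" "(x,x,z)"] p by (rule mom_lin[OF h]) simp
  also have "\<dots> = (9/25)^2 * mom \<mu> k (x,x,z) (x,x,z) + (24/25)^2 * mom \<mu> k (x,y,z) (x,y,z)
      + (16/25)^2 * mom \<mu> k (y,y,z) (y,y,z)"
    using xy by (simp add: t_def c_def mom_phase[OF h, of x] cnt_def power2_eq_square)
  finally have e: "mom \<mu> k (x,x,z) (x,x,z) = (9/25)^2 * mom \<mu> k (x,x,z) (x,x,z) + (24/25)^2 * mom \<mu> k (x,y,z) (x,y,z)
      + (16/25)^2 * mom \<mu> k (y,y,z) (y,y,z)" .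
  have s1: "mom \<mu> k (y,y,z) (y,y,z) = mom \<mu> k (x,x,z) (x,x,z)"
    using mom_swap[OF h, where x=x and y=y and k=k and a="(x,x,z)" and b="(x,x,z)"] xy by (simp add: map3_def swp_def)
  show ?thesis using e unfolding s1 by (simp add: field_simps)
qed

definition ind :: "bool \<Rightarrow> complex" where "ind P = (if P then 1 else 0)"

definition pc :: "'n\<times>'n\<times>'n \<Rightarrow> 'n\<times>'n\<times>'n \<Rightarrow> complex" where
  "pc a b = ind (a = b) + ind (a = p12 b) + ind (a = p13 b) + ind (a = p23 b) + ind (a = c1 b) + ind (a = c2 b)"

lemma mom_diag_pc:
  fixes \<mu> :: "(complex^'n::finite^'n) measure"
  assumes h: "haar_measure \<mu>"
  shows "mom \<mu> k b b = mom \<mu> k (x0,x0,x0) (x0,x0,x0) / 6 * pc b b"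
proof -
  define A where "A = mom \<mu> k (x0,x0,x0) (x0,x0,x0)"
  have G2: "mom \<mu> k (x,x,x) (x,x,x) = A" for x
    using mom_swap[OF h, where x=x0 and y=x and k=k and a="(x0,x0,x0)" and b="(x0,x0,x0)"]
    unfolding A_def by (simp add: map3_def swp_def)
  have G3: "mom \<mu> k (x,x,y) (x,x,y) = A / 3" if "x \<noteq> y" for x y
    using rot1[OF h that, of k] G2[of x] by simp
  have G4: "mom \<mu> k (x,y,z) (x,y,z) = A / 6" if "x \<noteq> y" "x \<noteq> z" "y \<noteq> z" for x y z
    using rot2[OF h that, of k] G3[of x z] that by simp
  have c: "mom \<mu> k (x,y,x) (x,y,x) = mom \<mu> k (x,x,y) (x,x,y)" "mom \<mu> k (y,x,x) (y,x,x) = mom \<mu> k (x,x,y) (x,x,y)" for x y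
    unfolding mom_def pr_def by (simp_all add: mult_ac)
  obtain b1 b2 b3 where b: "b = (b1,b2,b3)" by (cases b) auto
  show ?thesis unfolding A_def[symmetric] b
  proof (cases "b1 = b2")
    case True
    show "mom \<mu> k (b1, b2, b3) (b1, b2, b3) = A / 6 * pc (b1, b2, b3) (b1, b2, b3)"
    proof (cases "b2 = b3")
      case True
      thus ?thesis using \<open>b1 = b2\<close> G2 by (simp add: pc_def ind_def p12_def p13_def p23_def c1_def c2_def)
    next
      case False
      thus ?thesis using \<open>b1 = b2\<close> G3 by (simp add: pc_def ind_def p12_def p13_def p23_def c1_def c2_def)
    qed
  next
    case False
    show "mom \<mu> k (b1, b2, b3) (b1, b2, b3) = A / 6 * pc (b1, b2, b3) (b1, b2, b3)"
    proof (cases "b1 = b3")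
      case True
      thus ?thesis using \<open>b1 \<noteq> b2\<close> G3[of b1 b2] c(1)[of b1 b2]
        by (simp add: pc_def ind_def p12_def p13_def p23_def c1_def c2_def)
    next
      case f2: False
      show ?thesis
      proof (cases "b2 = b3")
        case True
        thus ?thesis using \<open>b1 \<noteq> b2\<close> G3[of b2 b1] c(2)[of b1 b2]
          by (simp add: pc_def ind_def p12_def p13_def p23_def c1_def c2_def)
      next
        case False
        thus ?thesis using \<open>b1 \<noteq> b2\<close> f2 G4[of b1 b2 b3]
          by (simp add: pc_def ind_def p12_def p13_def p23_def c1_def c2_def)
      qed
    qed
  qed
qed

lemma pr_perm: "a = b \<or> a = p12 b \<or> a = p13 b \<or> a = p23 b \<or> a = c1 b \<or> a = c2 b \<Longrightarrow> pr U k a = pr U k b"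
  unfolding pr_def p12_def p13_def p23_def c1_def c2_def by (auto simp: mult_ac split: prod.splits)

lemma pc_perm: "a = b \<or> a = p12 b \<or> a = p13 b \<or> a = p23 b \<or> a = c1 b \<or> a = c2 b \<Longrightarrow> pc a b = pc b b"
proof -
  assume as: "a = b \<or> a = p12 b \<or> a = p13 b \<or> a = p23 b \<or> a = c1 b \<or> a = c2 b"
  obtain x y z where b: "b = (x,y,z)" by (cases b) auto
  show ?thesis using as unfolding b pc_def ind_def p12_def p13_def p23_def c1_def c2_def
    by (elim disjE; cases "x = y"; cases "y = z"; cases "x = z"; simp)
qed

lemma pc_nonperm: "\<not> (a = b \<or> a = p12 b \<or> a = p13 b \<or> a = p23 b \<or> a = c1 b \<or> a = c2 b) \<Longrightarrow> pc a b = 0"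
  unfolding pc_def ind_def by auto

lemma mom_pc0:
  fixes \<mu> :: "(complex^'n::finite^'n) measure"
  assumes h: "haar_measure \<mu>"
  shows "mom \<mu> k a b = mom \<mu> k (x0,x0,x0) (x0,x0,x0) / 6 * pc a b"
proof (cases "a = b \<or> a = p12 b \<or> a = p13 b \<or> a = p23 b \<or> a = c1 b \<or> a = c2 b")
  case True
  have "mom \<mu> k a b = mom \<mu> k b b" unfolding mom_def using pr_perm[OF True] by simp
  thus ?thesis using mom_diag_pc[OF h] pc_perm[OF True] by simp
next
  case False
  thus ?thesis using mom_nonperm[OF h False] pc_nonperm[OF False] by simp
qed

lemma sum3: "(\<Sum>a\<in>(UNIV::('a::finite\<times>'b::finite\<times>'c::finite) set). g a) = (\<Sum>a1\<in>UNIV. \<Sum>a2\<in>UNIV. \<Sum>a3\<in>UNIV. g (a1,a2,a3))"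
  by (simp add: UNIV_Times_UNIV[symmetric] sum.cartesian_product del: UNIV_Times_UNIV)

lemma pc_diag: "pc (a1,a2,a3) (a1,a2,a3) = 1 + (if a2 = a1 then 1 else 0) + (if a3 = a1 then 1 else 0) + (if a3 = a2 then 1 else 0)
   + 2 * (if a3 = a1 then (if a2 = a1 then 1 else 0) else 0)"
  unfolding pc_def ind_def p12_def p13_def p23_def c1_def c2_def by auto

lemma pc_sum: "(\<Sum>b\<in>UNIV. pc b (b::'n::finite\<times>'n\<times>'n)) = of_nat CARD('n)^3 + 3 * of_nat CARD('n)^2 + 2 * of_nat CARD('n)"
  unfolding sum3 pc_diag
  by (simp add: sum.distrib sum_distrib_left[symmetric] power2_eq_square power3_eq_cube algebra_simps)

lemma meas_mu:
  fixes \<mu> :: "(complex^'n::finite^'n) measure"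
  assumes "haar_measure \<mu>" "h \<in> borel_measurable borel"
  shows "h \<in> borel_measurable \<mu>"
proof -
  have s: "sets \<mu> = sets borel" using assms unfolding haar_measure_def by auto
  show ?thesis using assms(2) measurable_cong_sets[OF s refl] by blast
qed

lemma mom_norm:
  fixes \<mu> :: "(complex^'n::finite^'n) measure"
  assumes h: "haar_measure \<mu>"
  shows "(\<Sum>b\<in>UNIV. mom \<mu> k b b) = 1"
proof -
  have p: "prob_space \<mu>" and ae: "AE U in \<mu>. unitary_mat U"
    using h unfolding haar_measure_def by auto
  have "(\<Sum>b\<in>UNIV. mom \<mu> k b b) = (\<integral>U. (\<Sum>b\<in>UNIV. pr U k b * cnj (pr U k b)) \<partial>\<mu>)"
    unfolding mom_def by (rule Bochner_Integration.integral_sum[symmetric]) (rule mono_int[OF h])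
  also have "\<dots> = (\<integral>U. 1 \<partial>\<mu>)"
  proof (rule integral_cong_AE)
    show "AE U in \<mu>. (\<Sum>b\<in>UNIV. pr U k b * cnj (pr U k b)) = 1"
      using ae
    proof eventually_elim
      case (elim U)
      have "(\<Sum>b\<in>UNIV. pr U k b * cnj (pr U k b)) = (\<Sum>i\<in>UNIV. cnj (U$i$k) * U$i$k)^3"
        unfolding sum3 pr_def power3_eq_cube sum_product
        by (simp add: sum_distrib_left sum_distrib_right mult_ac)
      also have "\<dots> = 1" using unit_col[OF elim, of k k] by simp
      finally show ?case .
    qed
  qed (auto intro!: meas_mu[OF h] borel_measurable_continuous_onI continuous_intros simp: pr_def)
  also have "\<dots> = 1" using p by (simp add: prob_space.prob_space)
  finally show ?thesis .
qed

lemma mom_formula: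
  fixes \<mu> :: "(complex^'n::finite^'n) measure"
  assumes h: "haar_measure \<mu>"
  shows "mom \<mu> k a b = pc a b / (of_nat CARD('n) * (of_nat CARD('n) + 1) * (of_nat CARD('n) + 2))"
proof -
  define \<kappa> where "\<kappa> = mom \<mu> k (undefined,undefined,undefined) (undefined,undefined,undefined) / 6"
  have m: "mom \<mu> k a b = \<kappa> * pc a b" for a b unfolding \<kappa>_def by (rule mom_pc0[OF h])
  have "1 = (\<Sum>b\<in>UNIV. mom \<mu> k b b)" using mom_norm[OF h] by simp
  also have "\<dots> = \<kappa> * (\<Sum>b\<in>UNIV. pc b (b::'n\<times>'n\<times>'n))" by (simp add: m sum_distrib_left)
  also have "\<dots> = \<kappa> * (of_nat CARD('n) * (of_nat CARD('n) + 1) * (of_nat CARD('n) + 2))"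
    unfolding pc_sum by (simp add: algebra_simps power2_eq_square power3_eq_cube)
  finally have e: "1 = \<kappa> * (of_nat CARD('n) * (of_nat CARD('n) + 1) * (of_nat CARD('n) + 2) :: complex)" .
  have nz: "(of_nat CARD('n) * (of_nat CARD('n) + 1) * (of_nat CARD('n) + 2) :: complex) \<noteq> 0"
  proof -
    have "(of_nat CARD('n) * (of_nat CARD('n) + 1) * (of_nat CARD('n) + 2) :: complex)
      = of_nat (CARD('n) * (CARD('n) + 1) * (CARD('n) + 2))" by (simp add: algebra_simps)
    moreover have "CARD('n) * (CARD('n) + 1) * (CARD('n) + 2) \<noteq> 0" by simp
    ultimately show ?thesis by (metis of_nat_eq_0_iff)
  qed
  have "\<kappa> = 1 / (of_nat CARD('n) * (of_nat CARD('n) + 1) * (of_nat CARD('n) + 2))"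
    using e nz by (metis nonzero_mult_div_cancel_right)
  thus ?thesis using m by simp
qed

abbreviation dd :: "'n::finite itself \<Rightarrow> complex" where "dd _ \<equiv> of_nat CARD('n)"

lemma X_entry: "mmul O_plus O_plus c e = (if c = e then (1 + (- of_nat CARD('n)) ^ (wt c - 1))^2 else (0::complex))"
  for c e :: "'n::finite\<times>'n\<times>'n"
  unfolding mmul_def O_plus_def
  by (simp add: if_distrib[where f="\<lambda>z. z * _"] if_distrib[where f="\<lambda>z. _ * z"] power2_eq_square cong: if_cong)

lemma osq: fixes c :: "'n::finite\<times>'n\<times>'n"
  defines "d \<equiv> (of_nat CARD('n) :: complex)"
  shows "(1 + (- d) ^ (wt c - 1))^2 = 4 + ((1-d)^2 - 4) * (ind (fst c = fst (snd c)) + ind (fst (snd c) = snd (snd c)) + ind (fst c = snd (snd c)))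
     + ((1+d^2)^2 - 3*(1-d)^2 + 8) * ind (fst c = fst (snd c) \<and> fst (snd c) = snd (snd c))"
proof -
  obtain x y z where c: "c = (x,y,z)" by (cases c) auto
  show ?thesis unfolding c wt_def ind_def
    by (cases "x = y"; cases "y = z"; cases "x = z"; simp add: algebra_simps power2_eq_square)
qed

lemma sum_if_out: "(\<Sum>x\<in>A. if P then f x else 0) = (if P then sum f A else 0)"
  by simp
lemma if_conj0: "(if A \<and> B then x else 0) = (if A then (if B then x else 0) else 0)"
  by simp

lemma sum_diag12: "(\<Sum>c\<in>UNIV. ind (fst c = fst (snd c)) * F c) = (\<Sum>c1\<in>UNIV. \<Sum>c3\<in>UNIV. (F (c1,c1,c3)::complex))"
  for F :: "'n::finite\<times>'n\<times>'n \<Rightarrow> complex"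
  unfolding sum3 ind_def by (simp add: sum_distrib_left[symmetric] if_distrib[where f="\<lambda>z. z * _"] sum_if_out if_conj0 cong: if_cong)
lemma sum_diag23: "(\<Sum>c\<in>UNIV. ind (fst (snd c) = snd (snd c)) * F c) = (\<Sum>c1\<in>UNIV. \<Sum>c2\<in>UNIV. (F (c1,c2,c2)::complex))"
  for F :: "'n::finite\<times>'n\<times>'n \<Rightarrow> complex"
  unfolding sum3 ind_def by (simp add: sum_distrib_left[symmetric] if_distrib[where f="\<lambda>z. z * _"] sum_if_out if_conj0 cong: if_cong)
lemma sum_diag13: "(\<Sum>c\<in>UNIV. ind (fst c = snd (snd c)) * F c) = (\<Sum>c1\<in>UNIV. \<Sum>c2\<in>UNIV. (F (c1,c2,c1)::complex))"
  for F :: "'n::finite\<times>'n\<times>'n \<Rightarrow> complex"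
  unfolding sum3 ind_def by (simp add: sum_distrib_left[symmetric] if_distrib[where f="\<lambda>z. z * _"] sum_if_out if_conj0 cong: if_cong)
lemma sum_diag123: "(\<Sum>c\<in>UNIV. ind (fst c = fst (snd c) \<and> fst (snd c) = snd (snd c)) * F c) = (\<Sum>c1\<in>UNIV. (F (c1,c1,c1)::complex))"
  for F :: "'n::finite\<times>'n\<times>'n \<Rightarrow> complex"
  unfolding sum3 ind_def by (simp add: sum_distrib_left[symmetric] if_distrib[where f="\<lambda>z. z * _"] sum_if_out if_conj0 cong: if_cong)

lemma sum3_prod: "(\<Sum>c1\<in>UNIV. \<Sum>c2\<in>UNIV. \<Sum>c3\<in>UNIV. f c1 * g c2 * h c3) = sum f UNIV * sum g UNIV * (sum h UNIV :: complex)"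
  by (simp add: sum_distrib_left[symmetric] sum_distrib_right[symmetric] mult.assoc)

lemma S0: assumes "unitary_mat U"
  shows "(\<Sum>c\<in>UNIV. U3 U a c * cnj (U3 U b c)) = ind (a = b)"
proof -
  obtain a1 a2 a3 where a: "a = (a1,a2,a3)" by (cases a) auto
  obtain b1 b2 b3 where b: "b = (b1,b2,b3)" by (cases b) auto
  have "(\<Sum>c\<in>UNIV. U3 U a c * cnj (U3 U b c)) = (\<Sum>c1\<in>UNIV. \<Sum>c2\<in>UNIV. \<Sum>c3\<in>UNIV.
     (U$a1$c1 * cnj (U$b1$c1)) * (U$a2$c2 * cnj (U$b2$c2)) * (U$a3$c3 * cnj (U$b3$c3)))"
    unfolding sum3 U3_def a b by (simp add: mult_ac)
  also have "\<dots> = ind (a = b)" unfolding sum3_prod unit_row[OF assms] a b ind_def by simp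
  finally show ?thesis .
qed

lemma colnorm: assumes "unitary_mat U"
  shows "(z::complex) = (\<Sum>i\<in>UNIV. z * (U$i$k * cnj (U$i$k)))"
  using unit_col[OF assms, of k k] by (simp add: sum_distrib_left[symmetric] mult_ac)

lemma sum2_prod: "(\<Sum>c1\<in>UNIV. \<Sum>c3\<in>UNIV. f c1 * g c3) = sum f UNIV * (sum g UNIV :: complex)"
  by (simp add: sum_product)

lemma colsum: assumes "unitary_mat U"
  shows "(\<Sum>k\<in>UNIV. U$a1$k * U$a2$k * cnj (U$b1$k * U$b2$k)) =
    (\<Sum>k\<in>UNIV. \<Sum>i\<in>UNIV. pr U k (a1, a2, i) * cnj (pr U k (b1, b2, i)))"
proof (rule sum.cong[OF refl])
  fix k
  show "U$a1$k * U$a2$k * cnj (U$b1$k * U$b2$k) = (\<Sum>i\<in>UNIV. pr U k (a1, a2, i) * cnj (pr U k (b1, b2, i)))"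
    apply (subst colnorm[OF assms, of _ k])
    by (simp add: pr_def mult_ac sum_distrib_left)
qed

lemma S12: assumes "unitary_mat U"
  shows "(\<Sum>c\<in>UNIV. ind (fst c = fst (snd c)) * (U3 U a c * cnj (U3 U b c)))
    = ind (snd (snd a) = snd (snd b)) * (\<Sum>k\<in>UNIV. \<Sum>i\<in>UNIV. pr U k (fst a, fst (snd a), i) * cnj (pr U k (fst b, fst (snd b), i)))"
proof -
  obtain a1 a2 a3 where a: "a = (a1,a2,a3)" by (cases a) auto
  obtain b1 b2 b3 where b: "b = (b1,b2,b3)" by (cases b) auto
  have "(\<Sum>c\<in>UNIV. ind (fst c = fst (snd c)) * (U3 U a c * cnj (U3 U b c)))
     = (\<Sum>c1\<in>UNIV. \<Sum>c3\<in>UNIV. (U$a1$c1 * U$a2$c1 * cnj (U$b1$c1 * U$b2$c1)) * (U$a3$c3 * cnj (U$b3$c3)))"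
    unfolding sum_diag12 U3_def a b by (simp add: mult_ac)
  also have "\<dots> = ind (a3 = b3) * (\<Sum>k\<in>UNIV. U$a1$k * U$a2$k * cnj (U$b1$k * U$b2$k))"
    unfolding sum2_prod unit_row[OF assms] ind_def by simp
  finally show ?thesis unfolding colsum[OF assms] a b by simp
qed

lemma S23: assumes "unitary_mat U"
  shows "(\<Sum>c\<in>UNIV. ind (fst (snd c) = snd (snd c)) * (U3 U a c * cnj (U3 U b c)))
    = ind (fst a = fst b) * (\<Sum>k\<in>UNIV. \<Sum>i\<in>UNIV. pr U k (fst (snd a), snd (snd a), i) * cnj (pr U k (fst (snd b), snd (snd b), i)))"
proof -
  obtain a1 a2 a3 where a: "a = (a1,a2,a3)" by (cases a) auto
  obtain b1 b2 b3 where b: "b = (b1,b2,b3)" by (cases b) auto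
  have "(\<Sum>c\<in>UNIV. ind (fst (snd c) = snd (snd c)) * (U3 U a c * cnj (U3 U b c)))
     = (\<Sum>c1\<in>UNIV. \<Sum>c3\<in>UNIV. (U$a1$c1 * cnj (U$b1$c1)) * (U$a2$c3 * U$a3$c3 * cnj (U$b2$c3 * U$b3$c3)))"
    unfolding sum_diag23 U3_def a b by (simp add: mult_ac)
  also have "\<dots> = ind (a1 = b1) * (\<Sum>k\<in>UNIV. U$a2$k * U$a3$k * cnj (U$b2$k * U$b3$k))"
    unfolding sum2_prod unit_row[OF assms] ind_def by simp
  finally show ?thesis unfolding colsum[OF assms] a b by simp
qed

lemma S13: assumes "unitary_mat U"
  shows "(\<Sum>c\<in>UNIV. ind (fst c = snd (snd c)) * (U3 U a c * cnj (U3 U b c)))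
    = ind (fst (snd a) = fst (snd b)) * (\<Sum>k\<in>UNIV. \<Sum>i\<in>UNIV. pr U k (fst a, snd (snd a), i) * cnj (pr U k (fst b, snd (snd b), i)))"
proof -
  obtain a1 a2 a3 where a: "a = (a1,a2,a3)" by (cases a) auto
  obtain b1 b2 b3 where b: "b = (b1,b2,b3)" by (cases b) auto
  have "(\<Sum>c\<in>UNIV. ind (fst c = snd (snd c)) * (U3 U a c * cnj (U3 U b c)))
     = (\<Sum>c1\<in>UNIV. \<Sum>c3\<in>UNIV. (U$a1$c1 * U$a3$c1 * cnj (U$b1$c1 * U$b3$c1)) * (U$a2$c3 * cnj (U$b2$c3)))"
    unfolding sum_diag13 U3_def a b by (simp add: mult_ac)
  also have "\<dots> = ind (a2 = b2) * (\<Sum>k\<in>UNIV. U$a1$k * U$a3$k * cnj (U$b1$k * U$b3$k))"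
    unfolding sum2_prod unit_row[OF assms] ind_def by simp
  finally show ?thesis unfolding colsum[OF assms] a b by simp
qed

lemma S123: "(\<Sum>c\<in>UNIV. ind (fst c = fst (snd c) \<and> fst (snd c) = snd (snd c)) * (U3 U a c * cnj (U3 U b c)))
    = (\<Sum>k\<in>UNIV. pr U k a * cnj (pr U k b))"
  unfolding sum_diag123 U3_def pr_def by (simp add: case_prod_beta mult_ac)

lemma pc_pt: "pc (x1,x2,i) (y1,y2,i) = ind (x1 = y1 \<and> x2 = y2) + ind (x1 = y2 \<and> x2 = y1)
  + (if i = y1 then ind (x1 = y1 \<and> x2 = y2) else 0) + (if i = y2 then ind (x1 = y1 \<and> x2 = y2) else 0)
  + (if i = y1 then ind (x1 = y2 \<and> x2 = y1) else 0) + (if i = y2 then ind (x1 = y2 \<and> x2 = y1) else 0)"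
  unfolding pc_def ind_def p12_def p13_def p23_def c1_def c2_def by auto

lemma pcsum2: "(\<Sum>i\<in>UNIV. pc (x1,x2,i) (y1,y2,i)) = (of_nat CARD('n) + 2) * (ind (x1 = y1 \<and> x2 = y2) + ind (x1 = y2 \<and> x2 = y1))"
  for x1 :: "'n::finite"
  unfolding pc_pt by (simp add: sum.distrib algebra_simps)

definition k1 :: "complex \<Rightarrow> complex" where "k1 d = (1-d)^2 - 4"
definition k2 :: "complex \<Rightarrow> complex" where "k2 d = (1+d^2)^2 - 3*(1-d)^2 + 8"

abbreviation mon :: "'n \<Rightarrow> 'n\<times>'n\<times>'n \<Rightarrow> 'n\<times>'n\<times>'n \<Rightarrow> complex^'n^'n \<Rightarrow> complex" where
  "mon k a b U \<equiv> pr U k a * cnj (pr U k b)"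

lemma twirl_integrand:
  fixes U :: "complex^'n::finite^'n"
  assumes u: "unitary_mat U"
  defines "d \<equiv> (of_nat CARD('n) :: complex)"
  shows "(\<Sum>c\<in>UNIV. \<Sum>e\<in>UNIV. U3 U a c * mmul O_plus O_plus c e * cnj (U3 U b e)) =
    4 * ind (a = b) + k1 d * (ind (snd (snd a) = snd (snd b)) * (\<Sum>k\<in>UNIV. \<Sum>i\<in>UNIV. mon k (fst a, fst (snd a), i) (fst b, fst (snd b), i) U)
      + ind (fst a = fst b) * (\<Sum>k\<in>UNIV. \<Sum>i\<in>UNIV. mon k (fst (snd a), snd (snd a), i) (fst (snd b), snd (snd b), i) U)
      + ind (fst (snd a) = fst (snd b)) * (\<Sum>k\<in>UNIV. \<Sum>i\<in>UNIV. mon k (fst a, snd (snd a), i) (fst b, snd (snd b), i) U))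
    + k2 d * (\<Sum>k\<in>UNIV. mon k a b U)"
proof -
  have "(\<Sum>c\<in>UNIV. \<Sum>e\<in>UNIV. U3 U a c * mmul O_plus O_plus c e * cnj (U3 U b e))
    = (\<Sum>c\<in>UNIV. (1 + (- d) ^ (wt c - 1))^2 * (U3 U a c * cnj (U3 U b c)))"
    unfolding X_entry d_def
    by (simp add: if_distrib[where f="\<lambda>z. _ * z"] if_distrib[where f="\<lambda>z. z * _"] mult_ac cong: if_cong)
  also have "\<dots> = 4 * (\<Sum>c\<in>UNIV. U3 U a c * cnj (U3 U b c))
     + k1 d * ((\<Sum>c\<in>UNIV. ind (fst c = fst (snd c)) * (U3 U a c * cnj (U3 U b c)))
        + (\<Sum>c\<in>UNIV. ind (fst (snd c) = snd (snd c)) * (U3 U a c * cnj (U3 U b c)))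
        + (\<Sum>c\<in>UNIV. ind (fst c = snd (snd c)) * (U3 U a c * cnj (U3 U b c))))
     + k2 d * (\<Sum>c\<in>UNIV. ind (fst c = fst (snd c) \<and> fst (snd c) = snd (snd c)) * (U3 U a c * cnj (U3 U b c)))"
  proof -
    have o: "(1 + (- d) ^ (wt c - 1))^2 = 4 + k1 d * (ind (fst c = fst (snd c)) + ind (fst (snd c) = snd (snd c)) + ind (fst c = snd (snd c)))
     + k2 d * ind (fst c = fst (snd c) \<and> fst (snd c) = snd (snd c))" for c :: "'n\<times>'n\<times>'n"
      unfolding k1_def k2_def d_def by (rule osq)
    show ?thesis unfolding o by (simp add: distrib_left distrib_right sum.distrib sum_distrib_left mult_ac)
  qed
  finally show ?thesis unfolding S0[OF u] S12[OF u] S23[OF u] S13[OF u] S123 by simp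
qed

lemma summom2:
  fixes \<mu> :: "(complex^'n::finite^'n) measure"
  assumes h: "haar_measure \<mu>"
  shows "(\<Sum>k\<in>UNIV. \<Sum>i\<in>UNIV. mom \<mu> k (x1,x2,i) (y1,y2,i)) = of_nat CARD('n) * (of_nat CARD('n) + 2) * (ind (x1 = y1 \<and> x2 = y2) + ind (x1 = y2 \<and> x2 = y1))
     / (of_nat CARD('n) * (of_nat CARD('n) + 1) * (of_nat CARD('n) + 2))"
  unfolding mom_formula[OF h] sum_divide_distrib[symmetric] pcsum2 by simp

lemma summom3:
  fixes \<mu> :: "(complex^'n::finite^'n) measure"
  assumes h: "haar_measure \<mu>"
  shows "(\<Sum>k\<in>UNIV. mom \<mu> k a b) = of_nat CARD('n) * pc a b / (of_nat CARD('n) * (of_nat CARD('n) + 1) * (of_nat CARD('n) + 2))"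
  unfolding mom_formula[OF h] by simp

lemma int2:
  fixes \<mu> :: "(complex^'n::finite^'n) measure"
  assumes h: "haar_measure \<mu>"
  shows "integrable \<mu> (\<lambda>U. \<Sum>k\<in>UNIV. \<Sum>i\<in>UNIV. mon k (x i) (y i) U)"
  by (intro Bochner_Integration.integrable_sum mono_int[OF h])

lemma int3:
  fixes \<mu> :: "(complex^'n::finite^'n) measure"
  assumes h: "haar_measure \<mu>"
  shows "integrable \<mu> (\<lambda>U. \<Sum>k\<in>UNIV. mon k a b U)"
  by (intro Bochner_Integration.integrable_sum mono_int[OF h])

lemma integral2:
  fixes \<mu> :: "(complex^'n::finite^'n) measure"
  assumes h: "haar_measure \<mu>"
  shows "(\<integral>U. (\<Sum>k\<in>UNIV. \<Sum>i\<in>UNIV. mon k (x i) (y i) U) \<partial>\<mu>) = (\<Sum>k\<in>UNIV. \<Sum>i\<in>UNIV. mom \<mu> k (x i) (y i))"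
  unfolding mom_def
  by (subst Bochner_Integration.integral_sum, intro Bochner_Integration.integrable_sum mono_int[OF h],
      rule sum.cong[OF refl], rule Bochner_Integration.integral_sum, rule mono_int[OF h])

lemma integral3:
  fixes \<mu> :: "(complex^'n::finite^'n) measure"
  assumes h: "haar_measure \<mu>"
  shows "(\<integral>U. (\<Sum>k\<in>UNIV. mon k a b U) \<partial>\<mu>) = (\<Sum>k\<in>UNIV. mom \<mu> k a b)"
  unfolding mom_def
  by (rule Bochner_Integration.integral_sum, rule mono_int[OF h])

lemma twirl_mom:
  fixes \<mu> :: "(complex^'n::finite^'n) measure"
  assumes h: "haar_measure \<mu>"
  defines "d \<equiv> (of_nat CARD('n) :: complex)"
  shows "twirl3 \<mu> (mmul O_plus O_plus) a b =
    4 * ind (a = b) + k1 d * (ind (snd (snd a) = snd (snd b)) * (\<Sum>k\<in>UNIV. \<Sum>i\<in>UNIV. mom \<mu> k (fst a, fst (snd a), i) (fst b, fst (snd b), i))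
      + ind (fst a = fst b) * (\<Sum>k\<in>UNIV. \<Sum>i\<in>UNIV. mom \<mu> k (fst (snd a), snd (snd a), i) (fst (snd b), snd (snd b), i))
      + ind (fst (snd a) = fst (snd b)) * (\<Sum>k\<in>UNIV. \<Sum>i\<in>UNIV. mom \<mu> k (fst a, snd (snd a), i) (fst b, snd (snd b), i)))
    + k2 d * (\<Sum>k\<in>UNIV. mom \<mu> k a b)"
proof -
  have ae: "AE U in \<mu>. unitary_mat U" using h unfolding haar_measure_def by auto
  have "twirl3 \<mu> (mmul O_plus O_plus) a b = (\<integral>U. 
    4 * ind (a = b) + k1 d * (ind (snd (snd a) = snd (snd b)) * (\<Sum>k\<in>UNIV. \<Sum>i\<in>UNIV. mon k (fst a, fst (snd a), i) (fst b, fst (snd b), i) U)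
      + ind (fst a = fst b) * (\<Sum>k\<in>UNIV. \<Sum>i\<in>UNIV. mon k (fst (snd a), snd (snd a), i) (fst (snd b), snd (snd b), i) U)
      + ind (fst (snd a) = fst (snd b)) * (\<Sum>k\<in>UNIV. \<Sum>i\<in>UNIV. mon k (fst a, snd (snd a), i) (fst b, snd (snd b), i) U))
    + k2 d * (\<Sum>k\<in>UNIV. mon k a b U) \<partial>\<mu>)"
    unfolding twirl3_def
  proof (rule integral_cong_AE)
    show "AE U in \<mu>. (\<Sum>c\<in>UNIV. \<Sum>e\<in>UNIV. U3 U a c * mmul O_plus O_plus c e * cnj (U3 U b e)) = 
      4 * ind (a = b) + k1 d * (ind (snd (snd a) = snd (snd b)) * (\<Sum>k\<in>UNIV. \<Sum>i\<in>UNIV. mon k (fst a, fst (snd a), i) (fst b, fst (snd b), i) U)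
      + ind (fst a = fst b) * (\<Sum>k\<in>UNIV. \<Sum>i\<in>UNIV. mon k (fst (snd a), snd (snd a), i) (fst (snd b), snd (snd b), i) U)
      + ind (fst (snd a) = fst (snd b)) * (\<Sum>k\<in>UNIV. \<Sum>i\<in>UNIV. mon k (fst a, snd (snd a), i) (fst b, snd (snd b), i) U))
    + k2 d * (\<Sum>k\<in>UNIV. mon k a b U)"
      using ae by eventually_elim (unfold d_def, rule twirl_integrand)
  qed (auto intro!: meas_mu[OF h] borel_measurable_continuous_onI continuous_intros simp: pr_def U3_def case_prod_beta)
  also have "\<dots> = 4 * ind (a = b) + k1 d * (ind (snd (snd a) = snd (snd b)) * (\<Sum>k\<in>UNIV. \<Sum>i\<in>UNIV. mom \<mu> k (fst a, fst (snd a), i) (fst b, fst (snd b), i))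
      + ind (fst a = fst b) * (\<Sum>k\<in>UNIV. \<Sum>i\<in>UNIV. mom \<mu> k (fst (snd a), snd (snd a), i) (fst (snd b), snd (snd b), i))
      + ind (fst (snd a) = fst (snd b)) * (\<Sum>k\<in>UNIV. \<Sum>i\<in>UNIV. mom \<mu> k (fst a, snd (snd a), i) (fst b, snd (snd b), i)))
    + k2 d * (\<Sum>k\<in>UNIV. mom \<mu> k a b)"
  proof -
    have p: "prob_space \<mu>" using h unfolding haar_measure_def by auto
    interpret prob_space \<mu> by (rule p)
    have c: "has_bochner_integral \<mu> (\<lambda>U. c) c" for c :: complex
      by (simp add: has_bochner_integral_iff prob_space)
    have f1: "has_bochner_integral \<mu> (\<lambda>U. \<Sum>k\<in>UNIV. \<Sum>i\<in>UNIV. mon k (x i) (y i) U) (\<Sum>k\<in>UNIV. \<Sum>i\<in>UNIV. mom \<mu> k (x i) (y i))" for x y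
      using int2[OF h, of x y] integral2[OF h, of x y] by (simp add: has_bochner_integral_iff)
    have f3: "has_bochner_integral \<mu> (\<lambda>U. \<Sum>k\<in>UNIV. mon k a b U) (\<Sum>k\<in>UNIV. mom \<mu> k a b)"
      using int3[OF h] integral3[OF h] by (simp add: has_bochner_integral_iff)
    show ?thesis
      by (intro has_bochner_integral_integral_eq has_bochner_integral_add has_bochner_integral_mult_right c f1 f3)
  qed
  finally show ?thesis .
qed

definition Yf :: "complex \<Rightarrow> complex \<Rightarrow> complex \<Rightarrow> 'n\<times>'n\<times>'n \<Rightarrow> 'n\<times>'n\<times>'n \<Rightarrow> complex" where
  "Yf al be ga a b = al * ind (a = b) + be * (ind (a = p12 b) + ind (a = p13 b) + ind (a = p23 b))
     + ga * (ind (a = c1 b) + ind (a = c2 b))"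

lemma e1: "ind (snd (snd a) = snd (snd b)) * (ind (fst a = fst b \<and> fst (snd a) = fst (snd b)) + ind (fst a = fst (snd b) \<and> fst (snd a) = fst b))
   = ind (a = b) + ind (a = p12 b)"
  by (cases a; cases b) (auto simp: ind_def p12_def)

lemma e2: "ind (fst a = fst b) * (ind (fst (snd a) = fst (snd b) \<and> snd (snd a) = snd (snd b)) + ind (fst (snd a) = snd (snd b) \<and> snd (snd a) = fst (snd b)))
   = ind (a = b) + ind (a = p23 b)"
  by (cases a; cases b) (auto simp: ind_def p23_def)

lemma e3: "ind (fst (snd a) = fst (snd b)) * (ind (fst a = fst b \<and> snd (snd a) = snd (snd b)) + ind (fst a = snd (snd b) \<and> snd (snd a) = fst b))
   = ind (a = b) + ind (a = p13 b)"
  by (cases a; cases b) (auto simp: ind_def p13_def)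

lemma twirl_closed:
  fixes \<mu> :: "(complex^'n::finite^'n) measure"
  assumes h: "haar_measure \<mu>"
  defines "d \<equiv> (of_nat CARD('n) :: complex)"
  shows "twirl3 \<mu> (mmul O_plus O_plus) a b =
    Yf (4 + 3 * k1 d / (d+1) + k2 d / ((d+1)*(d+2))) (k1 d / (d+1) + k2 d / ((d+1)*(d+2))) (k2 d / ((d+1)*(d+2))) a b"
proof -
  have d0: "d \<noteq> 0" "d + 1 \<noteq> 0" "d + 2 \<noteq> 0" unfolding d_def
    by (metis of_nat_eq_0_iff zero_less_card_finite less_irrefl,
        metis of_nat_Suc of_nat_eq_0_iff add.commute nat.distinct(1),
        metis of_nat_add of_nat_eq_0_iff of_nat_numeral add_is_0 zero_neq_numeral)
  have r: "d * (d + 2) * X / (d * (d + 1) * (d + 2)) = X / (d+1)" "d * Y / (d * (d + 1) * (d + 2)) = Y / ((d+1)*(d+2))" for X Y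
  proof -
    have "d * (d + 2) * X / (d * (d + 1) * (d + 2)) = (d * (d + 2)) * X / ((d * (d + 2)) * (d + 1))"
      by (simp add: mult_ac)
    also have "\<dots> = X / (d+1)" using d0 by (intro mult_divide_mult_cancel_left) simp
    finally show "d * (d + 2) * X / (d * (d + 1) * (d + 2)) = X / (d+1)" .
    have "d * Y / (d * (d + 1) * (d + 2)) = d * Y / (d * ((d + 1) * (d + 2)))"
      by (simp add: mult_ac)
    also have "\<dots> = Y / ((d+1)*(d+2))" using d0 by (intro mult_divide_mult_cancel_left) simp
    finally show "d * Y / (d * (d + 1) * (d + 2)) = Y / ((d+1)*(d+2))" .
  qed
  show ?thesis
    unfolding twirl_mom[OF h] summom2[OF h] summom3[OF h] d_def[symmetric] r times_divide_eq_right e1 e2 e3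
    unfolding Yf_def pc_def
    by (simp add: divide_inverse algebra_simps)
qed

lemma ind_delta: "(\<Sum>a\<in>UNIV. ind (a = t) * F a) = (F t :: complex)" for t :: "'t::finite"
  unfolding ind_def by (simp add: if_distrib[where f="\<lambda>z. z * _"] cong: if_cong)

lemma collapse:
  fixes H :: "'a::finite \<Rightarrow> 'a \<Rightarrow> 'b::finite \<Rightarrow> 'b \<Rightarrow> complex"
  shows "(\<Sum>a\<in>UNIV. \<Sum>a'\<in>UNIV. \<Sum>b\<in>UNIV. \<Sum>b'\<in>UNIV. ind (a = f a') * ind (b = g b') * H a a' b b')
    = (\<Sum>a'\<in>UNIV. \<Sum>b'\<in>UNIV. H (f a') a' (g b') b')"
proof -
  have "(\<Sum>a\<in>UNIV. \<Sum>a'\<in>UNIV. \<Sum>b\<in>UNIV. \<Sum>b'\<in>UNIV. ind (a = f a') * ind (b = g b') * H a a' b b')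
    = (\<Sum>a'\<in>UNIV. \<Sum>a\<in>UNIV. ind (a = f a') * (\<Sum>b\<in>UNIV. \<Sum>b'\<in>UNIV. ind (b = g b') * H a a' b b'))"
    by (subst sum.swap) (simp add: sum_distrib_left mult.assoc)
  also have "\<dots> = (\<Sum>a'\<in>UNIV. \<Sum>b\<in>UNIV. \<Sum>b'\<in>UNIV. ind (b = g b') * H (f a') a' b b')"
    by (simp only: ind_delta)
  also have "\<dots> = (\<Sum>a'\<in>UNIV. \<Sum>b'\<in>UNIV. \<Sum>b\<in>UNIV. ind (b = g b') * H (f a') a' b b')"
    by (rule sum.cong[OF refl], rule sum.swap)
  also have "\<dots> = (\<Sum>a'\<in>UNIV. \<Sum>b'\<in>UNIV. H (f a') a' (g b') b')"
    by (simp only: ind_delta)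
  finally show ?thesis .
qed

definition Tt :: "('n \<times> 'm) op \<Rightarrow> 'n\<times>'n\<times>'n \<Rightarrow> 'n\<times>'n\<times>'n \<Rightarrow> 'm\<times>'m\<times>'m \<Rightarrow> 'm\<times>'m\<times>'m \<Rightarrow> complex" where
  "Tt R a a' b b' = R (fst a', fst b') (fst a, fst b) * R (fst (snd a'), fst (snd b')) (fst (snd a), fst (snd b))
     * R (snd (snd a'), snd (snd b')) (snd (snd a), snd (snd b))"

lemma tr_AB3_Tt: "tr_AB3 MA MB R = (\<Sum>a\<in>UNIV. \<Sum>a'\<in>UNIV. \<Sum>b\<in>UNIV. \<Sum>b'\<in>UNIV. MA a a' * MB b b' * Tt R a a' b b')"
  unfolding tr_AB3_def Tt_def by (simp add: case_prod_beta)

definition SS :: "('n::finite \<times> 'm::finite) op \<Rightarrow> ('n\<times>'n\<times>'n \<Rightarrow> 'n\<times>'n\<times>'n) \<Rightarrow> ('m\<times>'m\<times>'m \<Rightarrow> 'm\<times>'m\<times>'m) \<Rightarrow> complex" where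
  "SS R f g = (\<Sum>a'\<in>UNIV. \<Sum>b'\<in>UNIV. Tt R (f a') a' (g b') b')"

lemma trAB_add1: "tr_AB3 (\<lambda>a a'. X a a' + Y a a') MB R = tr_AB3 X MB R + tr_AB3 Y MB R"
  unfolding tr_AB3_Tt by (simp add: distrib_right sum.distrib)
lemma trAB_add2: "tr_AB3 MA (\<lambda>a a'. X a a' + Y a a') R = tr_AB3 MA X R + tr_AB3 MA Y R"
  unfolding tr_AB3_Tt by (simp add: distrib_right distrib_left sum.distrib)
lemma trAB_mult1: "tr_AB3 (\<lambda>a a'. c * X a a') MB R = c * tr_AB3 X MB R"
  unfolding tr_AB3_Tt by (simp add: sum_distrib_left mult.assoc)
lemma trAB_mult2: "tr_AB3 MA (\<lambda>a a'. c * X a a') R = c * tr_AB3 MA X R"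
  unfolding tr_AB3_Tt by (simp add: sum_distrib_left mult_ac)
lemma trAB_base: "tr_AB3 (\<lambda>a a'. ind (a = f a')) (\<lambda>b b'. ind (b = g b')) R = SS R f g"
  unfolding tr_AB3_Tt SS_def by (rule collapse)
lemma trAB_base1: "tr_AB3 (\<lambda>a a'. ind (a = a')) (\<lambda>b b'. ind (b = g b')) R = SS R id g"
  using trAB_base[of id g R] by simp
lemma trAB_base2: "tr_AB3 (\<lambda>a a'. ind (a = f a')) (\<lambda>b b'. ind (b = b')) R = SS R f id"
  using trAB_base[of f id R] by simp
lemma trAB_base3: "tr_AB3 (\<lambda>a a'. ind (a = a')) (\<lambda>b b'. ind (b = b')) R = SS R id id"
  using trAB_base[of id id R] by simp

lemma trAB_Yf: "tr_AB3 (Yf al be ga) (Yf al be ga) R =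
   al * al * SS R id id + al * be * (SS R id p12 + SS R id p13 + SS R id p23) + al * ga * (SS R id c1 + SS R id c2)
 + be * al * (SS R p12 id + SS R p13 id + SS R p23 id) + ga * al * (SS R c1 id + SS R c2 id)
 + be * be * (SS R p12 p12 + SS R p13 p13 + SS R p23 p23)
 + be * be * (SS R p12 p13 + SS R p12 p23 + SS R p13 p12 + SS R p13 p23 + SS R p23 p12 + SS R p23 p13)
 + be * ga * (SS R p12 c1 + SS R p12 c2 + SS R p13 c1 + SS R p13 c2 + SS R p23 c1 + SS R p23 c2)
 + ga * be * (SS R c1 p12 + SS R c2 p12 + SS R c1 p13 + SS R c2 p13 + SS R c1 p23 + SS R c2 p23)
 + ga * ga * (SS R c1 c1 + SS R c2 c2) + ga * ga * (SS R c1 c2 + SS R c2 c1)"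
  unfolding Yf_def trAB_add1 trAB_add2 trAB_mult1 trAB_mult2 trAB_base trAB_base1 trAB_base2 trAB_base3
  by (simp add: algebra_simps id_def)

lemma p12_alt: "p12 a = (fst (snd a), fst a, snd (snd a))" by (cases a) (simp add: p12_def)
lemma p13_alt: "p13 a = (snd (snd a), fst (snd a), fst a)" by (cases a) (simp add: p13_def)
lemma p23_alt: "p23 a = (fst a, snd (snd a), fst (snd a))" by (cases a) (simp add: p23_def)
lemma c1_alt: "c1 a = (fst (snd a), snd (snd a), fst a)" by (cases a) (simp add: c1_def)
lemma c2_alt: "c2 a = (snd (snd a), fst a, fst (snd a))" by (cases a) (simp add: c2_def)
lemmas perm_defs = p12_alt p13_alt p23_alt c1_alt c2_alt

lemma Tt_p12: "Tt R (p12 u) (p12 v) (p12 w) (p12 z) = Tt R u v w z" unfolding Tt_def perm_defs by (simp add: mult_ac)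
lemma Tt_p13: "Tt R (p13 u) (p13 v) (p13 w) (p13 z) = Tt R u v w z" unfolding Tt_def perm_defs by (simp add: mult_ac)
lemma Tt_p23: "Tt R (p23 u) (p23 v) (p23 w) (p23 z) = Tt R u v w z" unfolding Tt_def perm_defs by (simp add: mult_ac)
lemma Tt_c1: "Tt R (c1 u) (c1 v) (c1 w) (c1 z) = Tt R u v w z" unfolding Tt_def perm_defs by (simp add: mult_ac)
lemma Tt_c2: "Tt R (c2 u) (c2 v) (c2 w) (c2 z) = Tt R u v w z" unfolding Tt_def perm_defs by (simp add: mult_ac)

lemma sum_reindex_inv: assumes "\<And>x. P (Q x) = x" "\<And>x. Q (P x) = x"
  shows "sum h (UNIV::'a::finite set) = (sum (\<lambda>x. h (P x)) UNIV :: complex)"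
  by (rule sum.reindex_bij_witness[where i=P and j=Q]) (auto simp: assms)

lemma SS_conj:
  assumes "\<And>x. Pa (Qa x) = x" "\<And>x. Qa (Pa x) = x" "\<And>x. Pb (Qb x) = x" "\<And>x. Qb (Pb x) = x"
    "\<And>u v w z. Tt R (Pa u) (Pa v) (Pb w) (Pb z) = Tt R u v w z"
    "\<And>x. f (Pa x) = Pa (f' x)" "\<And>y. g (Pb y) = Pb (g' y)"
  shows "SS R f g = SS R f' g'"
proof -
  have "SS R f g = (\<Sum>a'\<in>UNIV. \<Sum>b'\<in>UNIV. Tt R (f (Pa a')) (Pa a') (g (Pb b')) (Pb b'))"
    unfolding SS_def
    by (subst sum_reindex_inv[where P=Pa and Q=Qa, OF assms(1,2)],
        rule sum.cong[OF refl], rule sum_reindex_inv[OF assms(3,4)])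
  also have "\<dots> = SS R f' g'" unfolding SS_def assms(6,7) assms(5) ..
  finally show ?thesis .
qed

lemma SSr1: "SS R id p13 = SS R id p12"
  by (rule SS_conj[where Pa=p23 and Qa=p23 and Pb=p23 and Qb=p23])
     (simp_all add: perm_defs Tt_p23[unfolded perm_defs])

lemma SSr2: "SS R id p23 = SS R id p12"
  by (rule SS_conj[where Pa=p13 and Qa=p13 and Pb=p13 and Qb=p13])
     (simp_all add: perm_defs Tt_p13[unfolded perm_defs])

lemma SSr3: "SS R id c2 = SS R id c1"
  by (rule SS_conj[where Pa=p12 and Qa=p12 and Pb=p12 and Qb=p12])
     (simp_all add: perm_defs Tt_p12[unfolded perm_defs])

lemma SSr4: "SS R p12 p13 = SS R p12 p23"
  by (rule SS_conj[where Pa=p12 and Qa=p12 and Pb=p12 and Qb=p12])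
     (simp_all add: perm_defs Tt_p12[unfolded perm_defs])

lemma SSr5: "SS R p12 c2 = SS R p12 c1"
  by (rule SS_conj[where Pa=p12 and Qa=p12 and Pb=p12 and Qb=p12])
     (simp_all add: perm_defs Tt_p12[unfolded perm_defs])

lemma SSr6: "SS R p13 id = SS R p12 id"
  by (rule SS_conj[where Pa=p23 and Qa=p23 and Pb=p23 and Qb=p23])
     (simp_all add: perm_defs Tt_p23[unfolded perm_defs])

lemma SSr7: "SS R p13 p12 = SS R p12 p23"
  by (rule SS_conj[where Pa=c1 and Qa=c2 and Pb=c1 and Qb=c2])
     (simp_all add: perm_defs Tt_c1[unfolded perm_defs])

lemma SSr8: "SS R p13 p13 = SS R p12 p12"
  by (rule SS_conj[where Pa=p23 and Qa=p23 and Pb=p23 and Qb=p23])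
     (simp_all add: perm_defs Tt_p23[unfolded perm_defs])

lemma SSr9: "SS R p13 p23 = SS R p12 p23"
  by (rule SS_conj[where Pa=p23 and Qa=p23 and Pb=p23 and Qb=p23])
     (simp_all add: perm_defs Tt_p23[unfolded perm_defs])

lemma SSr10: "SS R p13 c1 = SS R p12 c1"
  by (rule SS_conj[where Pa=c1 and Qa=c2 and Pb=c1 and Qb=c2])
     (simp_all add: perm_defs Tt_c1[unfolded perm_defs])

lemma SSr11: "SS R p13 c2 = SS R p12 c1"
  by (rule SS_conj[where Pa=p23 and Qa=p23 and Pb=p23 and Qb=p23])
     (simp_all add: perm_defs Tt_p23[unfolded perm_defs])

lemma SSr12: "SS R p23 id = SS R p12 id"
  by (rule SS_conj[where Pa=p13 and Qa=p13 and Pb=p13 and Qb=p13])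
     (simp_all add: perm_defs Tt_p13[unfolded perm_defs])

lemma SSr13: "SS R p23 p12 = SS R p12 p23"
  by (rule SS_conj[where Pa=p13 and Qa=p13 and Pb=p13 and Qb=p13])
     (simp_all add: perm_defs Tt_p13[unfolded perm_defs])

lemma SSr14: "SS R p23 p13 = SS R p12 p23"
  by (rule SS_conj[where Pa=c2 and Qa=c1 and Pb=c2 and Qb=c1])
     (simp_all add: perm_defs Tt_c2[unfolded perm_defs])

lemma SSr15: "SS R p23 p23 = SS R p12 p12"
  by (rule SS_conj[where Pa=p13 and Qa=p13 and Pb=p13 and Qb=p13])
     (simp_all add: perm_defs Tt_p13[unfolded perm_defs])

lemma SSr16: "SS R p23 c1 = SS R p12 c1"
  by (rule SS_conj[where Pa=c2 and Qa=c1 and Pb=c2 and Qb=c1])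
     (simp_all add: perm_defs Tt_c2[unfolded perm_defs])

lemma SSr17: "SS R p23 c2 = SS R p12 c1"
  by (rule SS_conj[where Pa=p13 and Qa=p13 and Pb=p13 and Qb=p13])
     (simp_all add: perm_defs Tt_p13[unfolded perm_defs])

lemma SSr18: "SS R c1 p13 = SS R c1 p12"
  by (rule SS_conj[where Pa=c1 and Qa=c2 and Pb=c1 and Qb=c2])
     (simp_all add: perm_defs Tt_c1[unfolded perm_defs])

lemma SSr19: "SS R c1 p23 = SS R c1 p12"
  by (rule SS_conj[where Pa=c2 and Qa=c1 and Pb=c2 and Qb=c1])
     (simp_all add: perm_defs Tt_c2[unfolded perm_defs])

lemma SSr20: "SS R c2 id = SS R c1 id"
  by (rule SS_conj[where Pa=p12 and Qa=p12 and Pb=p12 and Qb=p12])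
     (simp_all add: perm_defs Tt_p12[unfolded perm_defs])

lemma SSr21: "SS R c2 p12 = SS R c1 p12"
  by (rule SS_conj[where Pa=p12 and Qa=p12 and Pb=p12 and Qb=p12])
     (simp_all add: perm_defs Tt_p12[unfolded perm_defs])

lemma SSr22: "SS R c2 p13 = SS R c1 p12"
  by (rule SS_conj[where Pa=p23 and Qa=p23 and Pb=p23 and Qb=p23])
     (simp_all add: perm_defs Tt_p23[unfolded perm_defs])

lemma SSr23: "SS R c2 p23 = SS R c1 p12"
  by (rule SS_conj[where Pa=p13 and Qa=p13 and Pb=p13 and Qb=p13])
     (simp_all add: perm_defs Tt_p13[unfolded perm_defs])

lemma SSr24: "SS R c2 c1 = SS R c1 c2"
  by (rule SS_conj[where Pa=p12 and Qa=p12 and Pb=p12 and Qb=p12])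
     (simp_all add: perm_defs Tt_p12[unfolded perm_defs])

lemma SSr25: "SS R c2 c2 = SS R c1 c1"
  by (rule SS_conj[where Pa=p12 and Qa=p12 and Pb=p12 and Qb=p12])
     (simp_all add: perm_defs Tt_p12[unfolded perm_defs])

lemmas SS_red = SSr1 SSr2 SSr3 SSr4 SSr5 SSr6 SSr7 SSr8 SSr9 SSr10 SSr11 SSr12 SSr13 SSr14 SSr15 SSr16 SSr17 SSr18 SSr19 SSr20 SSr21 SSr22 SSr23 SSr24 SSr25

lemma sum_pair: "(\<Sum>x\<in>(UNIV::('a::finite\<times>'b::finite) set). f x) = (\<Sum>a\<in>UNIV. \<Sum>b\<in>UNIV. f (a,b))"
  by (simp add: UNIV_Times_UNIV[symmetric] sum.cartesian_product del: UNIV_Times_UNIV)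

lemmas trdefs = tr_def mmul_def ptrA_def ptrB_def kron_def idop_def ptransA_def

lemma tr_kron_id1: "tr (mmul X (kron idop M)) = (\<Sum>a\<in>UNIV. \<Sum>b\<in>UNIV. \<Sum>b'\<in>UNIV. X (a,b) (a,b') * M b' b)"
  for X :: "('n::finite\<times>'m::finite) op"
  unfolding tr_def mmul_def kron_def idop_def
  by (simp add: sum_pair if_distrib[where f="\<lambda>z. _ * z"] if_distrib[where f = "\<lambda>z. z * _"] sum_if_out cong: if_cong)
lemma tr_kron_id2: "tr (mmul X (kron M idop)) = (\<Sum>a\<in>UNIV. \<Sum>b\<in>UNIV. \<Sum>a'\<in>UNIV. X (a,b) (a',b) * M a' a)"
  for X :: "('n::finite\<times>'m::finite) op"
  unfolding tr_def mmul_def kron_def idop_def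
  by (simp add: sum_pair if_distrib[where f="\<lambda>z. _ * z"] if_distrib[where f = "\<lambda>z. z * _"] sum_if_out cong: if_cong)


lemma nest6: "(\<Sum>x1\<in>UNIV. \<Sum>x2\<in>UNIV. \<Sum>x3\<in>UNIV. \<Sum>x4\<in>UNIV. \<Sum>x5\<in>UNIV. \<Sum>x6\<in>UNIV. F x1 x2 x3 x4 x5 x6)
  = (\<Sum>t\<in>UNIV. case t of (x1,x2,x3,x4,x5,x6) \<Rightarrow> (F x1 x2 x3 x4 x5 x6 :: complex))"
  for F :: "'a::finite \<Rightarrow> 'b::finite \<Rightarrow> 'c::finite \<Rightarrow> 'd::finite \<Rightarrow> 'e::finite \<Rightarrow> 'f::finite \<Rightarrow> complex"
  by (simp add: sum_pair)

lemma rep1: "SS R id id = tr R ^ 3" for R :: "('n::finite\<times>'m::finite) op"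
proof -
  have 1: "SS R id id = (\<Sum>x1\<in>(UNIV::'n set). (\<Sum>x2\<in>(UNIV::'n set). (\<Sum>x3\<in>(UNIV::'n set). (\<Sum>y1\<in>(UNIV::'m set). (\<Sum>y2\<in>(UNIV::'m set). (\<Sum>y3\<in>(UNIV::'m set). R (x1, y1) (x1, y1) * R (x2, y2) (x2, y2) * R (x3, y3) (x3, y3)))))))"
    by (simp add: SS_def Tt_def perm_defs sum3)
  have 2: "tr R ^ 3 = (\<Sum>n\<in>(UNIV::'n set). (\<Sum>na\<in>(UNIV::'m set). (\<Sum>nb\<in>(UNIV::'n set). (\<Sum>nc\<in>(UNIV::'m set). (\<Sum>nd\<in>(UNIV::'n set). (\<Sum>ne\<in>(UNIV::'m set). R (nd, ne) (nd, ne) * R (nb, nc) (nb, nc) * R (n, na) (n, na)))))))"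
    unfolding trdefs by (simp add: sum_pair sum_distrib_left sum_distrib_right mult.assoc power3_eq_cube)
  have 3: "(\<Sum>x1\<in>(UNIV::'n set). (\<Sum>x2\<in>(UNIV::'n set). (\<Sum>x3\<in>(UNIV::'n set). (\<Sum>y1\<in>(UNIV::'m set). (\<Sum>y2\<in>(UNIV::'m set). (\<Sum>y3\<in>(UNIV::'m set). R (x1, y1) (x1, y1) * R (x2, y2) (x2, y2) * R (x3, y3) (x3, y3))))))) = (\<Sum>n\<in>(UNIV::'n set). (\<Sum>na\<in>(UNIV::'m set). (\<Sum>nb\<in>(UNIV::'n set). (\<Sum>nc\<in>(UNIV::'m set). (\<Sum>nd\<in>(UNIV::'n set). (\<Sum>ne\<in>(UNIV::'m set). R (nd, ne) (nd, ne) * R (nb, nc) (nb, nc) * R (n, na) (n, na)))))))"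
    unfolding nest6
    by (rule sum.reindex_bij_witness[where j="(\<lambda>(x1, x2, x3, y1, y2, y3). (x1, y1, x2, y2, x3, y3))" and i="(\<lambda>(n, na, nb, nc, nd, ne). (n, nb, nd, na, nc, ne))"]) (auto simp: mult_ac)
  show ?thesis unfolding 1 2 3 ..
qed

lemma rep2: "SS R id p12 = tr (mmul (ptrA R) (ptrA R)) * tr R" for R :: "('n::finite\<times>'m::finite) op"
proof -
  have 1: "SS R id p12 = (\<Sum>x1\<in>(UNIV::'n set). (\<Sum>x2\<in>(UNIV::'n set). (\<Sum>x3\<in>(UNIV::'n set). (\<Sum>y1\<in>(UNIV::'m set). (\<Sum>y2\<in>(UNIV::'m set). (\<Sum>y3\<in>(UNIV::'m set). R (x1, y1) (x1, y2) * R (x2, y2) (x2, y1) * R (x3, y3) (x3, y3)))))))"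
    by (simp add: SS_def Tt_def perm_defs sum3)
  have 2: "tr (mmul (ptrA R) (ptrA R)) * tr R = (\<Sum>n\<in>(UNIV::'n set). (\<Sum>na\<in>(UNIV::'m set). (\<Sum>nb\<in>(UNIV::'m set). (\<Sum>nc\<in>(UNIV::'m set). (\<Sum>nd\<in>(UNIV::'n set). (\<Sum>ne\<in>(UNIV::'n set). R (ne, nb) (ne, nc) * R (nd, nc) (nd, nb) * R (n, na) (n, na)))))))"
    unfolding trdefs by (simp add: sum_pair sum_distrib_left sum_distrib_right mult.assoc)
  have 3: "(\<Sum>x1\<in>(UNIV::'n set). (\<Sum>x2\<in>(UNIV::'n set). (\<Sum>x3\<in>(UNIV::'n set). (\<Sum>y1\<in>(UNIV::'m set). (\<Sum>y2\<in>(UNIV::'m set). (\<Sum>y3\<in>(UNIV::'m set). R (x1, y1) (x1, y2) * R (x2, y2) (x2, y1) * R (x3, y3) (x3, y3))))))) = (\<Sum>n\<in>(UNIV::'n set). (\<Sum>na\<in>(UNIV::'m set). (\<Sum>nb\<in>(UNIV::'m set). (\<Sum>nc\<in>(UNIV::'m set). (\<Sum>nd\<in>(UNIV::'n set). (\<Sum>ne\<in>(UNIV::'n set). R (ne, nb) (ne, nc) * R (nd, nc) (nd, nb) * R (n, na) (n, na)))))))"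
    unfolding nest6
    by (rule sum.reindex_bij_witness[where j="(\<lambda>(x1, x2, x3, y1, y2, y3). (x3, y3, y2, y1, x1, x2))" and i="(\<lambda>(n, na, nb, nc, nd, ne). (nd, ne, n, nc, nb, na))"]) (auto simp: mult_ac)
  show ?thesis unfolding 1 2 3 ..
qed

lemma rep3: "SS R p12 id = tr (mmul (ptrB R) (ptrB R)) * tr R" for R :: "('n::finite\<times>'m::finite) op"
proof -
  have 1: "SS R p12 id = (\<Sum>x1\<in>(UNIV::'n set). (\<Sum>x2\<in>(UNIV::'n set). (\<Sum>x3\<in>(UNIV::'n set). (\<Sum>y1\<in>(UNIV::'m set). (\<Sum>y2\<in>(UNIV::'m set). (\<Sum>y3\<in>(UNIV::'m set). R (x1, y1) (x2, y1) * R (x2, y2) (x1, y2) * R (x3, y3) (x3, y3)))))))"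
    by (simp add: SS_def Tt_def perm_defs sum3)
  have 2: "tr (mmul (ptrB R) (ptrB R)) * tr R = (\<Sum>n\<in>(UNIV::'n set). (\<Sum>na\<in>(UNIV::'m set). (\<Sum>nb\<in>(UNIV::'n set). (\<Sum>nc\<in>(UNIV::'n set). (\<Sum>nd\<in>(UNIV::'m set). (\<Sum>ne\<in>(UNIV::'m set). R (nb, ne) (nc, ne) * R (nc, nd) (nb, nd) * R (n, na) (n, na)))))))"
    unfolding trdefs by (simp add: sum_pair sum_distrib_left sum_distrib_right mult.assoc)
  have 3: "(\<Sum>x1\<in>(UNIV::'n set). (\<Sum>x2\<in>(UNIV::'n set). (\<Sum>x3\<in>(UNIV::'n set). (\<Sum>y1\<in>(UNIV::'m set). (\<Sum>y2\<in>(UNIV::'m set). (\<Sum>y3\<in>(UNIV::'m set). R (x1, y1) (x2, y1) * R (x2, y2) (x1, y2) * R (x3, y3) (x3, y3))))))) = (\<Sum>n\<in>(UNIV::'n set). (\<Sum>na\<in>(UNIV::'m set). (\<Sum>nb\<in>(UNIV::'n set). (\<Sum>nc\<in>(UNIV::'n set). (\<Sum>nd\<in>(UNIV::'m set). (\<Sum>ne\<in>(UNIV::'m set). R (nb, ne) (nc, ne) * R (nc, nd) (nb, nd) * R (n, na) (n, na)))))))"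
    unfolding nest6
    by (rule sum.reindex_bij_witness[where j="(\<lambda>(x1, x2, x3, y1, y2, y3). (x3, y3, x1, x2, y2, y1))" and i="(\<lambda>(n, na, nb, nc, nd, ne). (nb, nc, n, ne, nd, na))"]) (auto simp: mult_ac)
  show ?thesis unfolding 1 2 3 ..
qed

lemma rep4: "SS R id c1 = tr (mmul (ptrA R) (mmul (ptrA R) (ptrA R)))" for R :: "('n::finite\<times>'m::finite) op"
proof -
  have 1: "SS R id c1 = (\<Sum>x1\<in>(UNIV::'n set). (\<Sum>x2\<in>(UNIV::'n set). (\<Sum>x3\<in>(UNIV::'n set). (\<Sum>y1\<in>(UNIV::'m set). (\<Sum>y2\<in>(UNIV::'m set). (\<Sum>y3\<in>(UNIV::'m set). R (x1, y1) (x1, y2) * R (x2, y2) (x2, y3) * R (x3, y3) (x3, y1)))))))"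
    by (simp add: SS_def Tt_def perm_defs sum3)
  have 2: "tr (mmul (ptrA R) (mmul (ptrA R) (ptrA R))) = (\<Sum>i\<in>(UNIV::'m set). (\<Sum>k\<in>(UNIV::'m set). (\<Sum>n\<in>(UNIV::'m set). (\<Sum>na\<in>(UNIV::'n set). (\<Sum>nb\<in>(UNIV::'n set). (\<Sum>nc\<in>(UNIV::'n set). R (nc, i) (nc, k) * R (nb, k) (nb, n) * R (na, n) (na, i)))))))"
    unfolding trdefs by (simp add: sum_pair sum_distrib_left sum_distrib_right mult.assoc)
  have 3: "(\<Sum>x1\<in>(UNIV::'n set). (\<Sum>x2\<in>(UNIV::'n set). (\<Sum>x3\<in>(UNIV::'n set). (\<Sum>y1\<in>(UNIV::'m set). (\<Sum>y2\<in>(UNIV::'m set). (\<Sum>y3\<in>(UNIV::'m set). R (x1, y1) (x1, y2) * R (x2, y2) (x2, y3) * R (x3, y3) (x3, y1))))))) = (\<Sum>i\<in>(UNIV::'m set). (\<Sum>k\<in>(UNIV::'m set). (\<Sum>n\<in>(UNIV::'m set). (\<Sum>na\<in>(UNIV::'n set). (\<Sum>nb\<in>(UNIV::'n set). (\<Sum>nc\<in>(UNIV::'n set). R (nc, i) (nc, k) * R (nb, k) (nb, n) * R (na, n) (na, i)))))))"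
    unfolding nest6
    by (rule sum.reindex_bij_witness[where j="(\<lambda>(x1, x2, x3, y1, y2, y3). (y2, y3, y1, x1, x3, x2))" and i="(\<lambda>(i, k, n, na, nb, nc). (na, nc, nb, n, i, k))"]) (auto simp: mult_ac)
  show ?thesis unfolding 1 2 3 ..
qed

lemma rep5: "SS R c1 id = tr (mmul (ptrB R) (mmul (ptrB R) (ptrB R)))" for R :: "('n::finite\<times>'m::finite) op"
proof -
  have 1: "SS R c1 id = (\<Sum>x1\<in>(UNIV::'n set). (\<Sum>x2\<in>(UNIV::'n set). (\<Sum>x3\<in>(UNIV::'n set). (\<Sum>y1\<in>(UNIV::'m set). (\<Sum>y2\<in>(UNIV::'m set). (\<Sum>y3\<in>(UNIV::'m set). R (x1, y1) (x2, y1) * R (x2, y2) (x3, y2) * R (x3, y3) (x1, y3)))))))"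
    by (simp add: SS_def Tt_def perm_defs sum3)
  have 2: "tr (mmul (ptrB R) (mmul (ptrB R) (ptrB R))) = (\<Sum>i\<in>(UNIV::'n set). (\<Sum>k\<in>(UNIV::'n set). (\<Sum>n\<in>(UNIV::'n set). (\<Sum>na\<in>(UNIV::'m set). (\<Sum>nb\<in>(UNIV::'m set). (\<Sum>nc\<in>(UNIV::'m set). R (i, nc) (k, nc) * R (k, nb) (n, nb) * R (n, na) (i, na)))))))"
    unfolding trdefs by (simp add: sum_pair sum_distrib_left sum_distrib_right mult.assoc)
  have 3: "(\<Sum>x1\<in>(UNIV::'n set). (\<Sum>x2\<in>(UNIV::'n set). (\<Sum>x3\<in>(UNIV::'n set). (\<Sum>y1\<in>(UNIV::'m set). (\<Sum>y2\<in>(UNIV::'m set). (\<Sum>y3\<in>(UNIV::'m set). R (x1, y1) (x2, y1) * R (x2, y2) (x3, y2) * R (x3, y3) (x1, y3))))))) = (\<Sum>i\<in>(UNIV::'n set). (\<Sum>k\<in>(UNIV::'n set). (\<Sum>n\<in>(UNIV::'n set). (\<Sum>na\<in>(UNIV::'m set). (\<Sum>nb\<in>(UNIV::'m set). (\<Sum>nc\<in>(UNIV::'m set). R (i, nc) (k, nc) * R (k, nb) (n, nb) * R (n, na) (i, na)))))))"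
    unfolding nest6
    by (rule sum.reindex_bij_witness[where j="(\<lambda>(x1, x2, x3, y1, y2, y3). (x1, x2, x3, y3, y2, y1))" and i="(\<lambda>(i, k, n, na, nb, nc). (i, k, n, nc, nb, na))"]) (auto simp: mult_ac)
  show ?thesis unfolding 1 2 3 ..
qed

lemma rep6: "SS R p12 p12 = tr (mmul R R) * tr R" for R :: "('n::finite\<times>'m::finite) op"
proof -
  have 1: "SS R p12 p12 = (\<Sum>x1\<in>(UNIV::'n set). (\<Sum>x2\<in>(UNIV::'n set). (\<Sum>x3\<in>(UNIV::'n set). (\<Sum>y1\<in>(UNIV::'m set). (\<Sum>y2\<in>(UNIV::'m set). (\<Sum>y3\<in>(UNIV::'m set). R (x1, y1) (x2, y2) * R (x2, y2) (x1, y1) * R (x3, y3) (x3, y3)))))))"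
    by (simp add: SS_def Tt_def perm_defs sum3)
  have 2: "tr (mmul R R) * tr R = (\<Sum>n\<in>(UNIV::'n set). (\<Sum>na\<in>(UNIV::'m set). (\<Sum>nb\<in>(UNIV::'n set). (\<Sum>nc\<in>(UNIV::'m set). (\<Sum>nd\<in>(UNIV::'n set). (\<Sum>ne\<in>(UNIV::'m set). R (nb, nc) (nd, ne) * R (nd, ne) (nb, nc) * R (n, na) (n, na)))))))"
    unfolding trdefs by (simp add: sum_pair sum_distrib_left sum_distrib_right mult.assoc)
  have 3: "(\<Sum>x1\<in>(UNIV::'n set). (\<Sum>x2\<in>(UNIV::'n set). (\<Sum>x3\<in>(UNIV::'n set). (\<Sum>y1\<in>(UNIV::'m set). (\<Sum>y2\<in>(UNIV::'m set). (\<Sum>y3\<in>(UNIV::'m set). R (x1, y1) (x2, y2) * R (x2, y2) (x1, y1) * R (x3, y3) (x3, y3))))))) = (\<Sum>n\<in>(UNIV::'n set). (\<Sum>na\<in>(UNIV::'m set). (\<Sum>nb\<in>(UNIV::'n set). (\<Sum>nc\<in>(UNIV::'m set). (\<Sum>nd\<in>(UNIV::'n set). (\<Sum>ne\<in>(UNIV::'m set). R (nb, nc) (nd, ne) * R (nd, ne) (nb, nc) * R (n, na) (n, na)))))))"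
    unfolding nest6
    by (rule sum.reindex_bij_witness[where j="(\<lambda>(x1, x2, x3, y1, y2, y3). (x3, y3, x1, y1, x2, y2))" and i="(\<lambda>(n, na, nb, nc, nd, ne). (nb, nd, n, nc, ne, na))"]) (auto simp: mult_ac)
  show ?thesis unfolding 1 2 3 ..
qed

lemma rep7: "SS R p12 p23 = tr (mmul R (kron (ptrB R) (ptrA R)))" for R :: "('n::finite\<times>'m::finite) op"
proof -
  have 1: "SS R p12 p23 = (\<Sum>x1\<in>(UNIV::'n set). (\<Sum>x2\<in>(UNIV::'n set). (\<Sum>x3\<in>(UNIV::'n set). (\<Sum>y1\<in>(UNIV::'m set). (\<Sum>y2\<in>(UNIV::'m set). (\<Sum>y3\<in>(UNIV::'m set). R (x1, y1) (x2, y1) * R (x2, y2) (x1, y3) * R (x3, y3) (x3, y2)))))))"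
    by (simp add: SS_def Tt_def perm_defs sum3)
  have 2: "tr (mmul R (kron (ptrB R) (ptrA R))) = (\<Sum>a\<in>(UNIV::'n set). (\<Sum>b\<in>(UNIV::'m set). (\<Sum>aa\<in>(UNIV::'n set). (\<Sum>ba\<in>(UNIV::'m set). (\<Sum>n\<in>(UNIV::'n set). (\<Sum>na\<in>(UNIV::'m set). R (a, b) (aa, ba) * R (aa, na) (a, na) * R (n, ba) (n, b)))))))"
    unfolding trdefs by (simp add: sum_pair sum_distrib_left sum_distrib_right mult.assoc)
  have 3: "(\<Sum>x1\<in>(UNIV::'n set). (\<Sum>x2\<in>(UNIV::'n set). (\<Sum>x3\<in>(UNIV::'n set). (\<Sum>y1\<in>(UNIV::'m set). (\<Sum>y2\<in>(UNIV::'m set). (\<Sum>y3\<in>(UNIV::'m set). R (x1, y1) (x2, y1) * R (x2, y2) (x1, y3) * R (x3, y3) (x3, y2))))))) = (\<Sum>a\<in>(UNIV::'n set). (\<Sum>b\<in>(UNIV::'m set). (\<Sum>aa\<in>(UNIV::'n set). (\<Sum>ba\<in>(UNIV::'m set). (\<Sum>n\<in>(UNIV::'n set). (\<Sum>na\<in>(UNIV::'m set). R (a, b) (aa, ba) * R (aa, na) (a, na) * R (n, ba) (n, b)))))))"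
    unfolding nest6
    by (rule sum.reindex_bij_witness[where j="(\<lambda>(x1, x2, x3, y1, y2, y3). (x2, y2, x1, y3, x3, y1))" and i="(\<lambda>(a, b, aa, ba, n, na). (aa, a, n, na, b, ba))"]) (auto simp: mult_ac)
  show ?thesis unfolding 1 2 3 ..
qed

lemma rep8: "SS R p12 c1 = tr (mmul (mmul R R) (kron idop (ptrA R)))" for R :: "('n::finite\<times>'m::finite) op"
proof -
  have 1: "SS R p12 c1 = (\<Sum>x1\<in>(UNIV::'n set). (\<Sum>x2\<in>(UNIV::'n set). (\<Sum>x3\<in>(UNIV::'n set). (\<Sum>y1\<in>(UNIV::'m set). (\<Sum>y2\<in>(UNIV::'m set). (\<Sum>y3\<in>(UNIV::'m set). R (x1, y1) (x2, y2) * R (x2, y2) (x1, y3) * R (x3, y3) (x3, y1)))))))"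
    by (simp add: SS_def Tt_def perm_defs sum3)
  have 2: "tr (mmul (mmul R R) (kron idop (ptrA R))) = (\<Sum>a\<in>(UNIV::'n set). (\<Sum>b\<in>(UNIV::'m set). (\<Sum>b'\<in>(UNIV::'m set). (\<Sum>n\<in>(UNIV::'n set). (\<Sum>na\<in>(UNIV::'n set). (\<Sum>nb\<in>(UNIV::'m set). R (a, b) (na, nb) * R (na, nb) (a, b') * R (n, b') (n, b)))))))"
    unfolding tr_kron_id1 unfolding trdefs by (simp add: sum_pair sum_distrib_left sum_distrib_right mult.assoc)
  have 3: "(\<Sum>x1\<in>(UNIV::'n set). (\<Sum>x2\<in>(UNIV::'n set). (\<Sum>x3\<in>(UNIV::'n set). (\<Sum>y1\<in>(UNIV::'m set). (\<Sum>y2\<in>(UNIV::'m set). (\<Sum>y3\<in>(UNIV::'m set). R (x1, y1) (x2, y2) * R (x2, y2) (x1, y3) * R (x3, y3) (x3, y1))))))) = (\<Sum>a\<in>(UNIV::'n set). (\<Sum>b\<in>(UNIV::'m set). (\<Sum>b'\<in>(UNIV::'m set). (\<Sum>n\<in>(UNIV::'n set). (\<Sum>na\<in>(UNIV::'n set). (\<Sum>nb\<in>(UNIV::'m set). R (a, b) (na, nb) * R (na, nb) (a, b') * R (n, b') (n, b)))))))"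
    unfolding nest6
    by (rule sum.reindex_bij_witness[where j="(\<lambda>(x1, x2, x3, y1, y2, y3). (x1, y1, y3, x3, x2, y2))" and i="(\<lambda>(a, b, b', n, na, nb). (a, na, n, b, nb, b'))"]) (auto simp: mult_ac)
  show ?thesis unfolding 1 2 3 ..
qed

lemma rep9: "SS R c1 p12 = tr (mmul (mmul R R) (kron (ptrB R) idop))" for R :: "('n::finite\<times>'m::finite) op"
proof -
  have 1: "SS R c1 p12 = (\<Sum>x1\<in>(UNIV::'n set). (\<Sum>x2\<in>(UNIV::'n set). (\<Sum>x3\<in>(UNIV::'n set). (\<Sum>y1\<in>(UNIV::'m set). (\<Sum>y2\<in>(UNIV::'m set). (\<Sum>y3\<in>(UNIV::'m set). R (x1, y1) (x2, y2) * R (x2, y2) (x3, y1) * R (x3, y3) (x1, y3)))))))"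
    by (simp add: SS_def Tt_def perm_defs sum3)
  have 2: "tr (mmul (mmul R R) (kron (ptrB R) idop)) = (\<Sum>a\<in>(UNIV::'n set). (\<Sum>b\<in>(UNIV::'m set). (\<Sum>a'\<in>(UNIV::'n set). (\<Sum>n\<in>(UNIV::'m set). (\<Sum>na\<in>(UNIV::'n set). (\<Sum>nb\<in>(UNIV::'m set). R (a, b) (na, nb) * R (na, nb) (a', b) * R (a', n) (a, n)))))))"
    unfolding tr_kron_id2 unfolding trdefs by (simp add: sum_pair sum_distrib_left sum_distrib_right mult.assoc)
  have 3: "(\<Sum>x1\<in>(UNIV::'n set). (\<Sum>x2\<in>(UNIV::'n set). (\<Sum>x3\<in>(UNIV::'n set). (\<Sum>y1\<in>(UNIV::'m set). (\<Sum>y2\<in>(UNIV::'m set). (\<Sum>y3\<in>(UNIV::'m set). R (x1, y1) (x2, y2) * R (x2, y2) (x3, y1) * R (x3, y3) (x1, y3))))))) = (\<Sum>a\<in>(UNIV::'n set). (\<Sum>b\<in>(UNIV::'m set). (\<Sum>a'\<in>(UNIV::'n set). (\<Sum>n\<in>(UNIV::'m set). (\<Sum>na\<in>(UNIV::'n set). (\<Sum>nb\<in>(UNIV::'m set). R (a, b) (na, nb) * R (na, nb) (a', b) * R (a', n) (a, n)))))))"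
    unfolding nest6
    by (rule sum.reindex_bij_witness[where j="(\<lambda>(x1, x2, x3, y1, y2, y3). (x1, y1, x3, y3, x2, y2))" and i="(\<lambda>(a, b, a', n, na, nb). (a, na, a', b, nb, n))"]) (auto simp: mult_ac)
  show ?thesis unfolding 1 2 3 ..
qed

lemma rep10: "SS R c1 c1 = tr (mmul R (mmul R R))" for R :: "('n::finite\<times>'m::finite) op"
proof -
  have 1: "SS R c1 c1 = (\<Sum>x1\<in>(UNIV::'n set). (\<Sum>x2\<in>(UNIV::'n set). (\<Sum>x3\<in>(UNIV::'n set). (\<Sum>y1\<in>(UNIV::'m set). (\<Sum>y2\<in>(UNIV::'m set). (\<Sum>y3\<in>(UNIV::'m set). R (x1, y1) (x2, y2) * R (x2, y2) (x3, y3) * R (x3, y3) (x1, y1)))))))"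
    by (simp add: SS_def Tt_def perm_defs sum3)
  have 2: "tr (mmul R (mmul R R)) = (\<Sum>a\<in>(UNIV::'n set). (\<Sum>b\<in>(UNIV::'m set). (\<Sum>aa\<in>(UNIV::'n set). (\<Sum>ba\<in>(UNIV::'m set). (\<Sum>n\<in>(UNIV::'n set). (\<Sum>na\<in>(UNIV::'m set). R (a, b) (aa, ba) * R (aa, ba) (n, na) * R (n, na) (a, b)))))))"
    unfolding trdefs by (simp add: sum_pair sum_distrib_left sum_distrib_right mult.assoc)
  have 3: "(\<Sum>x1\<in>(UNIV::'n set). (\<Sum>x2\<in>(UNIV::'n set). (\<Sum>x3\<in>(UNIV::'n set). (\<Sum>y1\<in>(UNIV::'m set). (\<Sum>y2\<in>(UNIV::'m set). (\<Sum>y3\<in>(UNIV::'m set). R (x1, y1) (x2, y2) * R (x2, y2) (x3, y3) * R (x3, y3) (x1, y1))))))) = (\<Sum>a\<in>(UNIV::'n set). (\<Sum>b\<in>(UNIV::'m set). (\<Sum>aa\<in>(UNIV::'n set). (\<Sum>ba\<in>(UNIV::'m set). (\<Sum>n\<in>(UNIV::'n set). (\<Sum>na\<in>(UNIV::'m set). R (a, b) (aa, ba) * R (aa, ba) (n, na) * R (n, na) (a, b)))))))"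
    unfolding nest6
    by (rule sum.reindex_bij_witness[where j="(\<lambda>(x1, x2, x3, y1, y2, y3). (x1, y1, x2, y2, x3, y3))" and i="(\<lambda>(a, b, aa, ba, n, na). (a, aa, n, b, ba, na))"]) (auto simp: mult_ac)
  show ?thesis unfolding 1 2 3 ..
qed

lemma rep11: "SS R c1 c2 = tr (mmul (ptransA R) (mmul (ptransA R) (ptransA R)))" for R :: "('n::finite\<times>'m::finite) op"
proof -
  have 1: "SS R c1 c2 = (\<Sum>x1\<in>(UNIV::'n set). (\<Sum>x2\<in>(UNIV::'n set). (\<Sum>x3\<in>(UNIV::'n set). (\<Sum>y1\<in>(UNIV::'m set). (\<Sum>y2\<in>(UNIV::'m set). (\<Sum>y3\<in>(UNIV::'m set). R (x1, y1) (x2, y3) * R (x2, y2) (x3, y1) * R (x3, y3) (x1, y2)))))))"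
    by (simp add: SS_def Tt_def perm_defs sum3)
  have 2: "tr (mmul (ptransA R) (mmul (ptransA R) (ptransA R))) = (\<Sum>a\<in>(UNIV::'n set). (\<Sum>b\<in>(UNIV::'m set). (\<Sum>aa\<in>(UNIV::'n set). (\<Sum>ba\<in>(UNIV::'m set). (\<Sum>n\<in>(UNIV::'n set). (\<Sum>na\<in>(UNIV::'m set). R (aa, b) (a, ba) * R (n, ba) (aa, na) * R (a, na) (n, b)))))))"
    unfolding trdefs by (simp add: sum_pair sum_distrib_left sum_distrib_right mult.assoc)
  have 3: "(\<Sum>x1\<in>(UNIV::'n set). (\<Sum>x2\<in>(UNIV::'n set). (\<Sum>x3\<in>(UNIV::'n set). (\<Sum>y1\<in>(UNIV::'m set). (\<Sum>y2\<in>(UNIV::'m set). (\<Sum>y3\<in>(UNIV::'m set). R (x1, y1) (x2, y3) * R (x2, y2) (x3, y1) * R (x3, y3) (x1, y2))))))) = (\<Sum>a\<in>(UNIV::'n set). (\<Sum>b\<in>(UNIV::'m set). (\<Sum>aa\<in>(UNIV::'n set). (\<Sum>ba\<in>(UNIV::'m set). (\<Sum>n\<in>(UNIV::'n set). (\<Sum>na\<in>(UNIV::'m set). R (aa, b) (a, ba) * R (n, ba) (aa, na) * R (a, na) (n, b)))))))"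
    unfolding nest6
    by (rule sum.reindex_bij_witness[where j="(\<lambda>(x1, x2, x3, y1, y2, y3). (x1, y3, x3, y2, x2, y1))" and i="(\<lambda>(a, b, aa, ba, n, na). (a, n, aa, na, ba, b))"]) (auto simp: mult_ac)
  show ?thesis unfolding 1 2 3 ..
qed

theorem proposition23:
  fixes \<mu> :: "(complex^'n::finite^'n) measure"
    and \<rho> :: "('n \<times> 'n) op"
    and d :: complex
  assumes "CARD('n) \<ge> 2"
    and "d = of_nat CARD('n)"
    and "haar_measure \<mu>"
    and "density \<rho>"
  shows "tr_AB3 (twirl3 \<mu> (mmul O_plus O_plus)) (twirl3 \<mu> (mmul O_plus O_plus)) \<rho> =
    1 / (d + 2)^2 *
    ( (tr (mmul (ptrB \<rho>) (ptrB \<rho>)) + tr (mmul (ptrA \<rho>) (ptrA \<rho>)))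
        * 3 * d * (d - 1)^2 * (d + 1) * (d^2 + 3 * d + 4)
    + (tr (mmul (ptrB \<rho>) (mmul (ptrB \<rho>) (ptrB \<rho>))) + tr (mmul (ptrA \<rho>) (mmul (ptrA \<rho>) (ptrA \<rho>))))
        * 2 * (d - 1) * ((d - 1) * d^2 + 6) * (d^2 + 3 * d + 4)
    + tr (mmul \<rho> \<rho>) * 3 * d^2 * (d^2 - 1)^2
    + tr (mmul \<rho> (mmul \<rho> \<rho>)) * 2 * ((d - 1) * d^2 + 6)^2
    + tr (mmul \<rho> (kron (ptrB \<rho>) (ptrA \<rho>))) * 6 * d^2 * (d^2 - 1)^2
    + (tr (mmul (mmul \<rho> \<rho>) (kron (ptrB \<rho>) idop)) + tr (mmul (mmul \<rho> \<rho>) (kron idop (ptrA \<rho>))))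
        * 6 * d * (d - 1) * (d + 1) * ((d - 1) * d^2 + 6)
    + 2 * tr (mmul (ptransA \<rho>) (mmul (ptransA \<rho>) (ptransA \<rho>))) * ((d - 1) * d^2 + 6)^2
    + (d * (d + 1)^2 - 4)^2 )"
proof -
  have t1: "tr \<rho> = 1" using assms(4) unfolding density_def by simp
  have tw: "twirl3 \<mu> (mmul O_plus O_plus) =
    Yf (4 + 3 * k1 d / (d+1) + k2 d / ((d+1)*(d+2))) (k1 d / (d+1) + k2 d / ((d+1)*(d+2))) (k2 d / ((d+1)*(d+2)))"
    unfolding assms(2) by (intro ext twirl_closed[OF assms(3)])
  have d1: "d + 1 \<noteq> 0" "d + 2 \<noteq> 0" unfolding assms(2)
    by (metis of_nat_Suc of_nat_eq_0_iff add.commute nat.distinct(1),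
        metis of_nat_add of_nat_eq_0_iff of_nat_numeral add_is_0 zero_neq_numeral)
  have cc: "k2 d / ((d+1)*(d+2)) = ((d-1)*d^2+6)/(d+2)"
  proof -
    have "k2 d = (d+1) * ((d-1)*d^2+6)" unfolding k2_def by (simp add: algebra_simps power2_eq_square)
    hence "k2 d / ((d+1)*(d+2)) = ((d+1) * ((d-1)*d^2+6)) / ((d+1)*(d+2))" by simp
    also have "\<dots> = ((d-1)*d^2+6)/(d+2)" using d1 by (intro mult_divide_mult_cancel_left) simp
    finally show ?thesis .
  qed
  have c1': "k1 d / (d+1) = d - 3"
  proof -
    have "k1 d = (d+1) * (d-3)" unfolding k1_def by (simp add: algebra_simps power2_eq_square)
    thus ?thesis using d1 by simp
  qed
  have ca: "4 + 3 * k1 d / (d+1) + k2 d / ((d+1)*(d+2)) = (d*(d+1)^2 - 4)/(d+2)"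
    unfolding cc times_divide_eq_right[symmetric] c1' using d1 by (simp add: field_simps) (simp add: algebra_simps power2_eq_square)
  have cb: "k1 d / (d+1) + k2 d / ((d+1)*(d+2)) = d*(d^2-1)/(d+2)"
    unfolding cc c1' using d1 by (simp add: field_simps) (simp add: algebra_simps power2_eq_square)
  define w where "w = 1 / (d + 2)"
  have wa: "(d*(d+1)^2 - 4)/(d+2) = (d*(d+1)^2 - 4) * w" "d*(d^2-1)/(d+2) = d*(d^2-1) * w"
    "((d-1)*d^2+6)/(d+2) = ((d-1)*d^2+6) * w" "1 / (d+2)^2 = w^2"
    unfolding w_def by (simp_all add: power2_eq_square)
  have tw2: "twirl3 \<mu> (mmul O_plus O_plus) = Yf ((d*(d+1)^2 - 4) * w) (d*(d^2-1) * w) (((d-1)*d^2+6) * w)"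
    unfolding tw by (subst ca, subst cb, subst cc, simp only: wa)
  show ?thesis
    unfolding tw2 trAB_Yf SS_red rep1 rep2 rep3 rep4 rep5 rep6 rep7 rep8 rep9 rep10 rep11 t1 wa(4) power_one mult_1_right
    by algebra
qed

end
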